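(* Let $r>1$, $0<a<r$ coprime, and let $\sigma$ be any $3$-dimensional cone of the Danilov fan $\Sigma(r,a)$. Then any two vertices of the McKay quiver of type $\frac1r(1,a,r-a)$ can be joined by a path, with orientations of arrows ignored, consisting of $\sigma$-distinguished arrows all different from $x_{r-1}$.
   Context: Notation: for integers $s$ and $t>0$, $\langle s\rangle_t$ is the least non-negative integer congruent to $s$ modulo $t$. A pair of integers $(r,a)$ is admissible if $r\ge1$, $0\le a<r$, $\gcd(r,a)=1$ (so $a=0$ only for $r=1$). For admissible $(r,a)$ put $N(r,a)=\mathbb Z^3+\mathbb Z\cdot\frac1r(1,a,r-a)\subset\mathbb Q^3$; $e_1,e_2,e_3$ is the standard basis and $\Delta(r,a)$ the cone spanned by $e_1,e_2,e_3$. Let $b$ be an inverse of $a$ modulo $r$ and $p_i=\frac1r(\langle -ib\rangle_r,r-i,i)$, $i=0,\dots,r$ (so $p_0=e_2$, $p_r=e_3$, $p_{r-a}=\frac1r(1,a,r-a)$). For $r>1$ let $(r_L,a_L)=(r-a,\langle r\rangle_{r-a})$, $(r_R,a_R)=(a,\langle -r\rangle_a)$; there are lattice isomorphisms $L:N(r_L,a_L)\to N(r,a)$, $R:N(r_R,a_R)\to N(r,a)$ with $L(e_1)=e_1$, $L(e_2)=e_2$, $L(e_3)=p_{r-a}$, $R(e_1)=e_1$, $R(e_2)=p_{r-a}$, $R(e_3)=e_3$. The Danilov fan $\Sigma(r,a)$ is defined recursively: $\Sigma(1,0)$ is $\Delta(1,0)$ with its faces; for $r>1$, $\Sigma(r,a)$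 consists of the cone spanned by $e_2,e_3,p_{r-a}$ with its faces, together with $L(\Sigma(r_L,a_L))$ and $R(\Sigma(r_R,a_R))$. The Danilov resolution $Y$ is the smooth toric variety of $\Sigma(r,a)$, with torus $T$; its rays are spanned by $e_1,p_0,\dots,p_r$; $D_i$ is the $T$-invariant prime divisor of the ray through $p_i$ and $E_j$ that of $e_j$. The permutation $\tau(r,a,\cdot)$ of $\{0,\dots,r-1\}$: if $a\in\{1,r-1\}$, $\tau(r,a,i)=\langle ai-1\rangle_r$; otherwise $\tau(r,a,i)=\tau(r-a,\langle r\rangle_{r-a},\langle i\rangle_{r-a})$ for $i\ge a$ and $\tau(r,a,i)=(r-a)+\tau(a,\langle -r\rangle_a,i)$ for $i<a$. With indices mod $r$, on $Y$ define $Y_{i-a}=\sum_{k=0}^{\tau(r,a,i)}D_k$, $Z_i=\sum_{k=\tau(r,a,i)+1}^{r}D_k$ ($i=0,\dots,r-1$), and $X_0,\dots,X_{r-1}$ the unique divisors with $X_0=E_1$ and $X_i+Z_{i+1}=Z_i+X_{i-a}$ for all $i$. The McKay quiver of type $\frac1r(1,a,r-a)$ has vertices $0,\dots,r-1$ (indices mod $r$) and arrows $x_i:i\to i+1$, $y_i:i\to i+a$, $z_i:i\to i-a$. The arrows $x_i,y_i,z_i$ are associated with the divisors $X_i,Y_i,Z_i$ respectively. For a $3$-dimensional cone $\sigma$ of $\Sigma(r,a)$, an arrow is $\sigma$-distinguished if its associated divisor has coefficient $0$ at each of the three rays of $\sigma$ (equivalently, its canonical section does not vanish at the $T$-fixed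 point of the chart $U_\sigma$). *)

theory Defs
  imports Complex_Main "HOL-Number_Theory.Cong"
begin

type_synonym vec3 = "rat \<times> rat \<times> rat"

definition c1 :: "vec3 \<Rightarrow> rat" where "c1 v = fst v"
definition c2 :: "vec3 \<Rightarrow> rat" where "c2 v = fst (snd v)"
definition c3 :: "vec3 \<Rightarrow> rat" where "c3 v = snd (snd v)"

definition e1 :: vec3 where "e1 = (1, 0, 0)"
definition e2 :: vec3 where "e2 = (0, 1, 0)"
definition e3 :: vec3 where "e3 = (0, 0, 1)"

definition lin3 :: "vec3 \<Rightarrow> vec3 \<Rightarrow> vec3 \<Rightarrow> vec3 \<Rightarrow> vec3" where
  "lin3 u v w x =
     (c1 x * c1 u + c2 x * c1 v + c3 x * c1 w,
      c1 x * c2 u + c2 x * c2 v + c3 x * c2 w,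
      c1 x * c3 u + c2 x * c3 v + c3 x * c3 w)"

text \<open>An inverse b of a modulo r (the value of b mod r is unique when gcd(r,a)=1).\<close>
definition binv :: "nat \<Rightarrow> nat \<Rightarrow> int" where
  "binv r a = (SOME b. [int a * b = 1] (mod int r))"

definition pvec :: "nat \<Rightarrow> nat \<Rightarrow> nat \<Rightarrow> vec3" where
  "pvec r a i =
     (of_int ((- int i * binv r a) mod int r) / of_nat r,
      (of_nat r - of_nat i) / of_nat r,
      of_nat i / of_nat r)"

section \<open>The 3-dimensional cones of the Danilov fan, each given by its set of three generators\<close>

function danilov_cones :: "nat \<Rightarrow> nat \<Rightarrow> vec3 set set" where
  "danilov_cones r a =
     (if r \<le> 1 \<or> a = 0 \<or> r \<le> a then {{e1, e2, e3}}
      else {{e2, e3, pvec r a (r - a)}}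
        \<union> (\<lambda>C. lin3 e1 e2 (pvec r a (r - a)) ` C) ` danilov_cones (r - a) (r mod (r - a))
        \<union> (\<lambda>C. lin3 e1 (pvec r a (r - a)) e3 ` C) ` danilov_cones a (nat ((- int r) mod int a)))"
  by pat_completeness auto
termination by (relation "measure fst") auto

function tau :: "nat \<Rightarrow> nat \<Rightarrow> nat \<Rightarrow> nat" where
  "tau r a i =
     (if r \<le> 1 \<or> a = 0 \<or> r \<le> a \<or> a = 1 \<or> a = r - 1
      then nat ((int a * int i - 1) mod int r)
      else if a \<le> i then tau (r - a) (r mod (r - a)) (i mod (r - a))
      else (r - a) + tau a (nat ((- int r) mod int a)) i)"
  by pat_completeness auto
termination by (relation "measure fst") auto

text \<open>Torus-invariant prime divisors are indexed by rays: None = the ray of e1 (E_1),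
  Some k = the ray of p_k (D_k). A divisor is its coefficient function.\<close>

type_synonym divisor = "nat option \<Rightarrow> int"

definition rays :: "nat \<Rightarrow> nat option set" where
  "rays r = insert None (Some ` {0..r})"

definition rayvec :: "nat \<Rightarrow> nat \<Rightarrow> nat option \<Rightarrow> vec3" where
  "rayvec r a \<rho> = (case \<rho> of None \<Rightarrow> e1 | Some k \<Rightarrow> pvec r a k)"

definition Ddiv :: "nat \<Rightarrow> divisor" where
  "Ddiv k = (\<lambda>\<rho>. if \<rho> = Some k then 1 else 0)"

definition E1div :: divisor where
  "E1div = (\<lambda>\<rho>. if \<rho> = None then 1 else 0)"

text \<open>Y_{i-a} = sum_{k=0}^{tau(i)} D_k, i.e. Y_j with j = (i - a) mod r, i = (j + a) mod r.\<close>
definition Ydiv :: "nat \<Rightarrow> nat \<Rightarrow> nat \<Rightarrow> divisor" where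
  "Ydiv r a j = (\<lambda>\<rho>. \<Sum>k\<in>{0..tau r a ((j + a) mod r)}. Ddiv k \<rho>)"

definition Zdiv :: "nat \<Rightarrow> nat \<Rightarrow> nat \<Rightarrow> divisor" where
  "Zdiv r a i = (\<lambda>\<rho>. \<Sum>k\<in>{tau r a i + 1..r}. Ddiv k \<rho>)"

text \<open>X_0, ..., X_{r-1}: the unique divisors with X_0 = E_1 and
  X_i + Z_{i+1} = Z_i + X_{i-a} (indices mod r); X_i := 0 for i >= r by convention.\<close>
definition Xdiv :: "nat \<Rightarrow> nat \<Rightarrow> nat \<Rightarrow> divisor" where
  "Xdiv r a = (THE X. X 0 = E1div
      \<and> (\<forall>i<r. \<forall>\<rho>. X i \<rho> + Zdiv r a ((i + 1) mod r) \<rho> = Zdiv r a i \<rho> + X ((i + r - a) mod r) \<rho>)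
      \<and> (\<forall>i\<ge>r. X i = (\<lambda>_. 0)))"

datatype arrow = ArrX nat | ArrY nat | ArrZ nat

fun arrow_tail :: "arrow \<Rightarrow> nat" where
  "arrow_tail (ArrX i) = i"
| "arrow_tail (ArrY i) = i"
| "arrow_tail (ArrZ i) = i"

fun arrow_head :: "nat \<Rightarrow> nat \<Rightarrow> arrow \<Rightarrow> nat" where
  "arrow_head r a (ArrX i) = (i + 1) mod r"
| "arrow_head r a (ArrY i) = (i + a) mod r"
| "arrow_head r a (ArrZ i) = (i + r - a) mod r"

fun arrow_div :: "nat \<Rightarrow> nat \<Rightarrow> arrow \<Rightarrow> divisor" where
  "arrow_div r a (ArrX i) = Xdiv r a i"
| "arrow_div r a (ArrY i) = Ydiv r a i"
| "arrow_div r a (ArrZ i) = Zdiv r a i"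

definition quiver_arrow :: "nat \<Rightarrow> arrow \<Rightarrow> bool" where
  "quiver_arrow r \<alpha> \<longleftrightarrow> arrow_tail \<alpha> < r"

definition distinguished :: "nat \<Rightarrow> nat \<Rightarrow> vec3 set \<Rightarrow> arrow \<Rightarrow> bool" where
  "distinguished r a \<sigma> \<alpha> \<longleftrightarrow>
     (\<forall>\<rho>\<in>rays r. rayvec r a \<rho> \<in> \<sigma> \<longrightarrow> arrow_div r a \<alpha> \<rho> = 0)"

end

theory Submission
  imports Defs
begin

declare danilov_cones.simps[simp del] tau.simps[simp del]

definition adm :: "nat \<Rightarrow> nat \<Rightarrow> bool" where
 "adm r a \<longleftrightarrow> 0 < r \<and> a < r \<and> coprime r a"

definition aR :: "nat \<Rightarrow> nat \<Rightarrow> nat" where "aR r a = nat ((- int r) mod int a)"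

lemma adm_pos: "adm r a \<Longrightarrow> 1 < r \<Longrightarrow> 0 < a"
  unfolding adm_def by (metis less_one nat_dvd_not_less neq0_conv coprime_0_right_iff)

lemma coprime_r_diff:
  fixes r a :: nat assumes h1: "coprime r a" and h2: "a \<le> r" shows "coprime r (r - a)"
proof (rule coprimeI)
  fix d assume h3: "d dvd r" and h4: "d dvd r - a"
  have "d dvd r - (r - a)" using h3 h4 by (simp add: dvd_diff_nat)
  hence "d dvd a" using h2 by simp
  thus "is_unit d" using h1 h3 by (meson coprime_common_divisor)
qed

lemma adm_L: "adm r a \<Longrightarrow> 1 < r \<Longrightarrow> adm (r - a) (r mod (r - a))"
proof -
  assume h: "adm r a" "1 < r"
  hence "0 < r - a" "coprime r a" "a < r" by (auto simp: adm_def)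
  moreover have c2: "coprime r (r - a)"
    using coprime_r_diff[OF \<open>coprime r a\<close>] \<open>a < r\<close> by simp
  moreover have "coprime (r - a) (r mod (r - a))"
    using c2 \<open>0 < r - a\<close> coprime_commute coprime_mod_right_iff by blast
  ultimately show ?thesis unfolding adm_def using mod_less_divisor[OF \<open>0<r-a\<close>] by blast
qed

lemma adm_R: "adm r a \<Longrightarrow> 1 < r \<Longrightarrow> adm a (aR r a)"
proof -
  assume h: "adm r a" "1 < r"
  hence a0: "0 < a" using adm_pos by blast
  have cop: "coprime r a" using h by (auto simp: adm_def)
  have lt: "aR r a < a" unfolding aR_def using a0 by (simp add: nat_less_iff)
  have "coprime (int a) ((- int r) mod int a)"
    using cop a0 by (simp add: coprime_commute)
  hence "coprime a (aR r a)" unfolding aR_def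
    using a0 by (metis coprime_int_iff nat_0_le of_nat_0_less_iff pos_mod_sign)
  thus ?thesis using lt a0 unfolding adm_def by blast
qed

lemma binv: "adm r a \<Longrightarrow> [int a * binv r a = 1] (mod int r)"
proof -
  assume "adm r a"
  hence "coprime (int a) (int r)" by (auto simp: adm_def coprime_commute)
  hence "\<exists>b. [int a * b = 1] (mod int r)" by (rule cong_solve_coprime_int)
  thus ?thesis unfolding binv_def by (rule someI_ex)
qed


lemma modI: "0 \<le> y \<Longrightarrow> y < m \<Longrightarrow> x = y + m * k \<Longrightarrow> x mod m = (y::int)"
  by simp

lemma tau_short: "r \<le> 1 \<or> a = 0 \<or> r \<le> a \<or> a = 1 \<or> a = r - 1 \<Longrightarrow>
   tau r a i = nat ((int a * int i - 1) mod int r)"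
  using tau.simps[of r a i] by simp

lemma tau_long: "\<not> (r \<le> 1 \<or> a = 0 \<or> r \<le> a \<or> a = 1 \<or> a = r - 1) \<Longrightarrow>
   tau r a i = (if a \<le> i then tau (r - a) (r mod (r - a)) (i mod (r - a))
      else (r - a) + tau a (aR r a) i)"
  using tau.simps[of r a i] unfolding aR_def by simp

lemma tau1: "tau 1 a i = 0"
  by (subst tau_short) auto

lemma tau_bound: "adm r a \<Longrightarrow> i < r \<Longrightarrow> tau r a i < r"
proof (induction r arbitrary: a i rule: less_induct)
  case (less r)
  have r0: "0 < r" using less.prems by (simp add: adm_def)
  show ?case
  proof (cases "r \<le> 1 \<or> a = 0 \<or> r \<le> a \<or> a = 1 \<or> a = r - 1")
    case True
    hence "tau r a i = nat ((int a * int i - 1) mod int r)" by (rule tau_short)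
    thus ?thesis using r0 by (simp add: nat_less_iff)
  next
    case False
    hence r1: "1 < r" and ar: "a < r" and a0: "0 < a" by auto
    show ?thesis
    proof (cases "a \<le> i")
      case True
      have "tau (r - a) (r mod (r - a)) (i mod (r - a)) < r - a"
        by (rule less.IH) (use adm_L[OF less.prems(1) r1] ar a0 in \<open>auto simp: adm_def\<close>)
      thus ?thesis using tau_long[OF False] True by simp
    next
      case f2: False
      have "tau a (aR r a) i < a"
        by (rule less.IH) (use adm_R[OF less.prems(1) r1] ar f2 in \<open>auto simp: adm_def\<close>)
      thus ?thesis using tau_long[OF False] f2 ar by simp
    qed
  qed
qed

lemma r_mod_r1: "2 < r \<Longrightarrow> r mod (r - 1) = (1::nat)"
proof -
  assume "2 < r"
  hence "r = 1 + (r - 1) * 1" "1 < r - 1" by auto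
  thus ?thesis by (metis mod_mult_self2 mod_less)
qed

lemma tau_rec: assumes "adm r a" "1 < r" "i < r"
  shows "tau r a i = (if a \<le> i then tau (r - a) (r mod (r - a)) (i mod (r - a))
      else (r - a) + tau a (aR r a) i)"
proof -
  have a0: "0 < a" and ar: "a < r" using assms adm_pos by (auto simp: adm_def)
  show ?thesis
  proof (cases "a = 1 \<or> a = r - 1")
    case False
    thus ?thesis using tau_long[of r a i] a0 ar assms by auto
  next
    case True
    note sh = tau_short[of r a i]
    show ?thesis
    proof (cases "a = 1")
      case a1: True
      have lhs: "tau r a i = nat ((int i - 1) mod int r)" using sh a1 by simp
      show ?thesis
      proof (cases "i = 0")
        case True
        have "(int i - 1) mod int r = int r - 1" using True assms(2)
          by (intro modI[where k="-1"]) auto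
        moreover have "tau a (aR r a) i = 0" using a1 tau1 by simp
        ultimately show ?thesis using lhs a1 True by simp
      next
        case i0: False
        show ?thesis
        proof (cases "r = 2")
          case True
          hence "i = 1" using i0 assms(3) by auto
          thus ?thesis using lhs a1 True tau1 by simp
        next
          case False
          hence r2: "2 < r" using assms(2) by auto
          have rm: "r mod (r - a) = 1" using r_mod_r1[OF r2] a1 by simp
          have sub: "tau (r - a) 1 j = nat ((int j - 1) mod int (r - 1))" for j
            using tau_short[of "r - a" 1 j] a1 by simp
          show ?thesis
          proof (cases "i = r - 1")
            case True
            have "(int i - 1) mod int r = int r - 2" using True r2
              by (intro modI[where k=0]) auto
            moreover have "(int (i mod (r - 1)) - 1) mod int (r - 1) = int r - 2"
              using True r2 by (intro modI[where k="-1"]) auto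
            ultimately show ?thesis using lhs a1 rm sub i0 by simp
          next
            case False
            hence il: "i < r - 1" using assms(3) by auto
            have "(int i - 1) mod int r = int i - 1" using il i0
              by (intro modI[where k=0]) auto
            moreover have "(int (i mod (r - 1)) - 1) mod int (r - 1) = int i - 1"
              using il i0 by (intro modI[where k=0]) auto
            ultimately show ?thesis using lhs a1 rm sub i0 by simp
          qed
        qed
      qed
    next
      case na1: False
      hence ar1: "a = r - 1" using True by simp
      hence r2: "2 < r" using na1 assms(2) by auto
      have lhs: "tau r a i = nat ((int (r - 1) * int i - 1) mod int r)" using sh ar1 by simp
      show ?thesis
      proof (cases "a \<le> i")
        case True
        hence ii: "i = r - 1" using ar1 assms(3) by auto
        have "(int (r - 1) * int i - 1) mod int r = 0" using ii r2
          by (intro modI[where k="int r - 2"]) (auto simp: of_nat_diff algebra_simps)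
        moreover have "r - a = 1" using ar1 r2 by simp
        ultimately show ?thesis using lhs True tau1 by simp
      next
        case False
        hence il: "i < r - 1" using ar1 by simp
        have aR: "aR r a = r - 2"
        proof -
          have "(- int r) mod int a = int r - 2" using ar1 r2
            by (intro modI[where k="-2"]) (auto simp: of_nat_diff algebra_simps)
          thus ?thesis unfolding aR_def by simp
        qed
        have sub: "tau a (aR r a) i = nat ((int (r - 2) * int i - 1) mod int (r - 1))"
        proof -
          have "r - 2 = (r - 1) - 1" by simp
          hence "tau (r - 1) (r - 2) i = nat ((int (r - 2) * int i - 1) mod int (r - 1))"
            using tau_short[of "r - 1" "r - 2" i] by simp
          thus ?thesis using aR ar1 by simp
        qed
        have e1: "(int (r - 1) * int i - 1) mod int r = int r - 1 - int i" using il r2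
          by (intro modI[where k="int i - 1"]) (auto simp: of_nat_diff algebra_simps)
        have e2: "(int (r - 2) * int i - 1) mod int (r - 1) = int r - 2 - int i" using il r2
          by (intro modI[where k="int i - 1"]) (auto simp: of_nat_diff algebra_simps)
        show ?thesis using lhs sub e1 e2 False ar1 il by simp
      qed
    qed
  qed
qed


lemma Dsum: "finite A \<Longrightarrow> (\<Sum>k\<in>A. Ddiv k \<rho>) = (case \<rho> of None \<Rightarrow> 0 | Some m \<Rightarrow> if m \<in> A then 1 else 0)"
  by (cases \<rho>) (auto simp: Ddiv_def)

lemma Zval: "Zdiv r a i \<rho> = (case \<rho> of None \<Rightarrow> 0 | Some k \<Rightarrow> if tau r a i < k \<and> k \<le> r then 1 else 0)"
  unfolding Zdiv_def by (simp add: Dsum split: option.split)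

lemma Yval: "Ydiv r a j \<rho> = (case \<rho> of None \<Rightarrow> 0 | Some k \<Rightarrow> if k \<le> tau r a ((j + a) mod r) then 1 else 0)"
  unfolding Ydiv_def by (simp add: Dsum split: option.split)

lemma rec_unique:
  fixes f g :: "nat \<Rightarrow> int"
  assumes r0: "0 < r" and cop: "coprime r a" and ar: "a < r" and h0: "f 0 = g 0"
    and hs: "\<And>i. i < r \<Longrightarrow> f i - f ((i + r - a) mod r) = g i - g ((i + r - a) mod r)"
    and ir: "i < r"
  shows "f i = g i"
proof -
  define d where "d i = f i - g i" for i
  have dstep: "d i = d ((i + r - a) mod r)" if "i < r" for i using hs[OF that] unfolding d_def by simp
  have dn: "d (((r - a) * n) mod r) = d 0" for n
  proof (induction n)
    case 0 show ?case by simp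
  next
    case (Suc n)
    let ?i = "((r-a)*n) mod r"
    have "?i < r" using r0 by simp
    hence "d ?i = d ((?i + r - a) mod r)" by (rule dstep)
    moreover have "(?i + r - a) mod r = ((r - a) * Suc n) mod r"
    proof -
      have "?i + r - a = ?i + (r - a)" using ar by simp
      moreover have "(?i + (r - a)) mod r = ((r - a) * n + (r - a)) mod r" by (rule mod_add_left_eq)
      moreover have "(r - a) * n + (r - a) = (r - a) * Suc n" by simp
      ultimately show ?thesis by simp
    qed
    ultimately show ?case using Suc by simp
  qed
  have "coprime (r - a) r" using coprime_r_diff[OF cop] ar by (simp add: coprime_commute)
  then obtain x where x: "[(r - a) * x = Suc 0] (mod r)" using cong_solve_coprime_nat by blast
  hence "[(r - a) * x * i = Suc 0 * i] (mod r)" by (rule cong_mult) simp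
  hence "((r - a) * (x * i)) mod r = i" using ir by (simp add: cong_def mult.assoc)
  hence "d i = d 0" using dn[of "x * i"] by simp
  thus ?thesis using h0 unfolding d_def by simp
qed

lemma sum_perm:
  fixes h :: "nat \<Rightarrow> int" assumes r0: "0 < r" and cop: "coprime a r"
  shows "(\<Sum>t<r. h ((t * a + c) mod r)) = (\<Sum>j<r. h j)"
proof -
  let ?f = "\<lambda>t. (t * a + c) mod r"
  have inj: "inj_on ?f {..<r}"
  proof (rule inj_onI)
    fix s t assume s: "s \<in> {..<r}" and t: "t \<in> {..<r}" and e: "?f s = ?f t"
    hence "[s * a + c = t * a + c] (mod r)" by (simp add: cong_def)
    hence "[s * a = t * a] (mod r)" by (simp add: cong_add_rcancel_nat)
    hence "[s = t] (mod r)" using cop cong_mult_rcancel_nat by blast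
    thus "s = t" using s t by (simp add: cong_def)
  qed
  have img: "?f ` {..<r} = {..<r}"
    by (rule card_subset_eq) (auto simp: card_image[OF inj] r0)
  have "(\<Sum>j<r. h j) = (\<Sum>j\<in>?f ` {..<r}. h j)" using img by simp
  also have "\<dots> = (\<Sum>t<r. h (?f t))" using sum.reindex[OF inj, of h] by simp
  finally show ?thesis by simp
qed

definition XP :: "nat \<Rightarrow> nat \<Rightarrow> (nat \<Rightarrow> divisor) \<Rightarrow> bool" where
  "XP r a X \<longleftrightarrow> X 0 = E1div
      \<and> (\<forall>i<r. \<forall>\<rho>. X i \<rho> + Zdiv r a ((i + 1) mod r) \<rho> = Zdiv r a i \<rho> + X ((i + r - a) mod r) \<rho>)
      \<and> (\<forall>i\<ge>r. X i = (\<lambda>_. 0))"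

lemma Xdiv_XP: "Xdiv r a = (THE X. XP r a X)"
  unfolding Xdiv_def XP_def by simp

lemma XP_unique: assumes "adm r a" "XP r a X" "XP r a Y" shows "X = Y"
proof (rule ext, rule ext)
  fix i \<rho>
  have r0: "0 < r" and ar: "a < r" and cop: "coprime r a" using assms(1) by (auto simp: adm_def)
  show "X i \<rho> = Y i \<rho>"
  proof (cases "i < r")
    case False thus ?thesis using assms(2,3) by (simp add: XP_def)
  next
    case True
    show ?thesis
    proof (rule rec_unique[OF r0 cop ar _ _ True, of "\<lambda>i. X i \<rho>" "\<lambda>i. Y i \<rho>"])
      show "X 0 \<rho> = Y 0 \<rho>" using assms(2,3) by (simp add: XP_def)
      fix j assume "j < r"
      thus "X j \<rho> - X ((j + r - a) mod r) \<rho> = Y j \<rho> - Y ((j + r - a) mod r) \<rho>"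
      proof -
        have "X j \<rho> + Zdiv r a ((j + 1) mod r) \<rho> = Zdiv r a j \<rho> + X ((j + r - a) mod r) \<rho>"
          "Y j \<rho> + Zdiv r a ((j + 1) mod r) \<rho> = Zdiv r a j \<rho> + Y ((j + r - a) mod r) \<rho>"
          using assms(2,3) \<open>j < r\<close> unfolding XP_def by blast+
        thus ?thesis by linarith
      qed
    qed
  qed
qed

lemma mod_inv_back:
  assumes "[a * b = Suc 0] (mod r)" "j < r"
  shows "(((j * b) mod r) * a) mod r = (j::nat)"
proof -
  have "[((j * b) mod r) * a = j * b * a] (mod r)" by (simp add: cong_def mod_mult_left_eq)
  moreover have "[j * b * a = j * (a * b)] (mod r)" by (simp add: ac_simps)
  moreover have "[j * (a * b) = j * Suc 0] (mod r)" using cong_mult[OF cong_refl assms(1)] by simp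
  ultimately have "[((j * b) mod r) * a = j * Suc 0] (mod r)" using cong_trans by blast
  thus ?thesis using assms(2) by (simp add: cong_def)
qed

lemma XP_exists: assumes "adm r a" shows "\<exists>X. XP r a X"
proof -
  have r0: "0 < r" and ar: "a < r" and cop: "coprime r a" using assms by (auto simp: adm_def)
  obtain b where b: "[a * b = Suc 0] (mod r)"
    using cong_solve_coprime_nat[of a r] cop by (auto simp: coprime_commute)
  define Z where "Z = Zdiv r a"
  define d where "d t \<rho> = Z ((t*a) mod r) \<rho> - Z ((t*a + 1) mod r) \<rho>" for t \<rho>
  define G where "G n \<rho> = (\<Sum>t<n. d (Suc t) \<rho>)" for n \<rho>
  define X where "X i = (if i < r then (\<lambda>\<rho>. E1div \<rho> + G ((i*b) mod r) \<rho>) else (\<lambda>_. 0))" for i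
  have Gr: "G r \<rho> = 0" for \<rho>
  proof -
    have cop': "coprime a r" using cop by (simp add: coprime_commute)
    have "G r \<rho> = (\<Sum>t<r. Z ((t*a + a) mod r) \<rho> - Z ((t*a + (a+1)) mod r) \<rho>)"
      unfolding G_def d_def by (intro sum.cong) (simp_all add: algebra_simps)
    also have "\<dots> = (\<Sum>t<r. Z ((t*a + a) mod r) \<rho>) - (\<Sum>t<r. Z ((t*a + (a+1)) mod r) \<rho>)"
      by (simp add: sum_subtractf)
    also have "\<dots> = 0"
      using sum_perm[OF r0 cop', of "\<lambda>j. Z j \<rho>" a] sum_perm[OF r0 cop', of "\<lambda>j. Z j \<rho>" "a+1"] by simp
    finally show ?thesis .
  qed
  have GS: "G (Suc m) \<rho> = G m \<rho> + d (Suc m) \<rho>" for m \<rho> unfolding G_def by simp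
  have "XP r a X"
    unfolding XP_def
  proof (intro conjI allI impI)
    show "X 0 = E1div" using r0 unfolding X_def G_def by auto
  next
    fix i :: nat assume "r \<le> i" thus "X i = (\<lambda>_. 0)" unfolding X_def by simp
  next
    fix i \<rho> assume ir: "i < r"
    define n where "n = (i*b) mod r"
    define j where "j = (i + r - a) mod r"
    define m where "m = (j*b) mod r"
    have jr: "j < r" unfolding j_def using r0 by simp
    have nr: "n < r" "m < r" unfolding n_def m_def using r0 by auto
    have na: "(n * a) mod r = i" unfolding n_def by (rule mod_inv_back[OF b ir])
    have ma: "(m * a) mod r = j" unfolding m_def by (rule mod_inv_back[OF b jr])
    have "((m + 1) * a) mod r = ((m * a) mod r + a) mod r"
      by (metis mod_add_left_eq add_mult_distrib mult_1)
    also have "\<dots> = (j + a) mod r" using ma by simp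
    also have "\<dots> = (i + r) mod r" unfolding j_def using ar by (simp add: mod_add_left_eq)
    also have "\<dots> = (n * a) mod r" using na ir by simp
    finally have "[(m + 1) * a = n * a] (mod r)" by (simp add: cong_def)
    hence "[m + 1 = n] (mod r)" using cop cong_mult_rcancel_nat by (metis coprime_commute)
    hence mn: "(m + 1) mod r = n" using nr by (simp add: cong_def)
    have Xi: "X i \<rho> = E1div \<rho> + G n \<rho>" unfolding X_def n_def using ir by simp
    have Xj: "X j \<rho> = E1div \<rho> + G m \<rho>" unfolding X_def m_def using jr by simp
    show "X i \<rho> + Zdiv r a ((i + 1) mod r) \<rho> = Zdiv r a i \<rho> + X ((i + r - a) mod r) \<rho>"
    proof (cases "n = 0")
      case False
      have "m + 1 < r"
      proof (rule ccontr)
        assume "\<not> m + 1 < r" hence "m + 1 = r" using nr by simp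
        thus False using mn False by simp
      qed
      hence mn2: "n = Suc m" using mn by simp
      have "d n \<rho> = Z i \<rho> - Z ((i + 1) mod r) \<rho>"
      proof -
        have "(n * a + 1) mod r = ((n * a) mod r + 1) mod r" by (rule mod_add_left_eq[symmetric])
        thus ?thesis unfolding d_def using na by simp
      qed
      thus ?thesis using Xi Xj GS[of m \<rho>] mn2 unfolding j_def Z_def by simp
    next
      case True
      hence i0: "i = 0" using na by simp
      have "m + 1 = r"
      proof (rule ccontr)
        assume "m + 1 \<noteq> r" hence "m + 1 < r" using nr by simp
        thus False using mn True by simp
      qed
      hence "G r \<rho> = G m \<rho> + d r \<rho>" using GS[of m \<rho>] by simp
      moreover have "d r \<rho> = Z 0 \<rho> - Z (1 mod r) \<rho>"
      proof -
        have "(r*a+1) = 1 + a * r" by simp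
        hence "(r * a + 1) mod r = 1 mod r" by (simp only: mod_mult_self1)
        thus ?thesis unfolding d_def by simp
      qed
      ultimately have "G m \<rho> = Z (1 mod r) \<rho> - Z 0 \<rho>" using Gr by simp
      thus ?thesis using Xi Xj True i0 unfolding j_def Z_def G_def by simp
    qed
  qed
  thus ?thesis by blast
qed

lemma Xdiv_XP_holds: "adm r a \<Longrightarrow> XP r a (Xdiv r a)"
proof -
  assume h: "adm r a"
  have "\<exists>!X. XP r a X" using XP_exists[OF h] XP_unique[OF h] by blast
  thus ?thesis unfolding Xdiv_XP by (rule theI'[of "XP r a"])
qed

lemma Xdiv0: "adm r a \<Longrightarrow> Xdiv r a 0 = E1div"
  using Xdiv_XP_holds by (simp add: XP_def)

lemma Xdiv_eq: "adm r a \<Longrightarrow> i < r \<Longrightarrow>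
  Xdiv r a i \<rho> + Zdiv r a ((i + 1) mod r) \<rho> = Zdiv r a i \<rho> + Xdiv r a ((i + r - a) mod r) \<rho>"
  using Xdiv_XP_holds unfolding XP_def by blast

lemma X_char:
  fixes g :: "nat \<Rightarrow> int"
  assumes "adm r a" "g 0 = E1div \<rho>"
    "\<And>i. i < r \<Longrightarrow> g i + Zdiv r a ((i + 1) mod r) \<rho> = Zdiv r a i \<rho> + g ((i + r - a) mod r)"
    "i < r"
  shows "Xdiv r a i \<rho> = g i"
proof -
  have r0: "0 < r" and ar: "a < r" and cop: "coprime r a" using assms(1) by (auto simp: adm_def)
  show ?thesis
  proof (rule rec_unique[OF r0 cop ar _ _ assms(4), of "\<lambda>i. Xdiv r a i \<rho>" g])
    show "Xdiv r a 0 \<rho> = g 0" using Xdiv0[OF assms(1)] assms(2) by simp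
    fix j assume j: "j < r"
    show "Xdiv r a j \<rho> - Xdiv r a ((j + r - a) mod r) \<rho> = g j - g ((j + r - a) mod r)"
      using Xdiv_eq[OF assms(1) j, of \<rho>] assms(3)[OF j] by simp
  qed
qed


lemma rays_iff: "\<rho> \<in> rays r \<longleftrightarrow> \<rho> = None \<or> (\<exists>k. \<rho> = Some k \<and> k \<le> r)"
  unfolding rays_def by auto

lemma modsub: "(a::nat) \<le> r \<Longrightarrow> i < r \<Longrightarrow> (i + r - a) mod r = (if a \<le> i then i - a else i + r - a)"
proof -
  assume h: "a \<le> r" "i < r"
  show ?thesis
  proof (cases "a \<le> i")
    case True
    hence "i + r - a = (i - a) + r" by arith
    hence "(i + r - a) mod r = (i - a) mod r" by simp
    thus ?thesis using True h by simp
  next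
    case False thus ?thesis using h by simp
  qed
qed

lemma modsuc: "(i::nat) < r \<Longrightarrow> (i + 1) mod r = (if i + 1 = r then 0 else i + 1)"
  by (cases "i + 1 = r") auto

lemma tau_lo: "adm r a \<Longrightarrow> 1 < r \<Longrightarrow> i < r \<Longrightarrow> i < a \<Longrightarrow> r - a \<le> tau r a i"
  using tau_rec[of r a i] by simp

lemma tau_hi: "adm r a \<Longrightarrow> 1 < r \<Longrightarrow> i < r \<Longrightarrow> a \<le> i \<Longrightarrow> tau r a i < r - a"
proof -
  assume h: "adm r a" "1 < r" "i < r" "a \<le> i"
  have a0: "0 < a" "a < r" using h adm_pos[OF h(1,2)] by (auto simp: adm_def)
  have "tau (r - a) (r mod (r - a)) (i mod (r - a)) < r - a"
    by (rule tau_bound[OF adm_L[OF h(1,2)]]) (use a0 in simp)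
  thus ?thesis using tau_rec[OF h(1-3)] h(4) by simp
qed

lemma ZL: assumes "adm r a" "1 < r" "i < r" "\<rho> \<in> rays (r - a)"
  shows "Zdiv r a i \<rho> = (if a \<le> i then Zdiv (r - a) (r mod (r - a)) (i mod (r - a)) \<rho> else 0)"
proof (cases \<rho>)
  case None thus ?thesis by (simp add: Zval)
next
  case (Some k)
  hence k: "k \<le> r - a" using assms(4) by (simp add: rays_iff)
  hence kr: "k \<le> r" by simp
  show ?thesis
  proof (cases "a \<le> i")
    case True thus ?thesis using tau_rec[OF assms(1-3)] Some k kr by (simp add: Zval)
  next
    case False thus ?thesis using tau_lo[OF assms(1-3)] Some k kr by (auto simp: Zval)
  qed
qed

lemma ZR: assumes "adm r a" "1 < r" "i < r" "\<rho> \<in> rays a"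
  shows "Zdiv r a i (map_option ((+) (r - a)) \<rho>) =
     (if i < a then Zdiv a (aR r a) i \<rho> else (if \<rho> = None then 0 else 1))"
proof (cases \<rho>)
  case None thus ?thesis by (simp add: Zval)
next
  case (Some k)
  hence k: "k \<le> a" using assms(4) by (simp add: rays_iff)
  have ar: "a < r" using assms(1) by (simp add: adm_def)
  show ?thesis
  proof (cases "i < a")
    case True thus ?thesis using tau_rec[OF assms(1-3)] Some k ar by (auto simp: Zval)
  next
    case False thus ?thesis using tau_hi[OF assms(1-3)] Some k ar by (auto simp: Zval)
  qed
qed

lemma Ztop: assumes "adm r a" "1 < r" "i < r"
  shows "Zdiv r a i (Some 0) = 0" "Zdiv r a i (Some r) = 1"
    "Zdiv r a i (Some (r - a)) = (if a \<le> i then 1 else 0)"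
proof -
  show "Zdiv r a i (Some 0) = 0" by (simp add: Zval)
  show "Zdiv r a i (Some r) = 1" using tau_bound[OF assms(1,3)] by (simp add: Zval)
  show "Zdiv r a i (Some (r - a)) = (if a \<le> i then 1 else 0)"
  proof (cases "a \<le> i")
    case True thus ?thesis using tau_hi[OF assms] by (simp add: Zval)
  next
    case False thus ?thesis using tau_lo[OF assms] by (simp add: Zval)
  qed
qed

lemma Xtop: assumes "adm r a" "1 < r" "i < r"
  shows "Xdiv r a i (Some 0) = 0" "Xdiv r a i (Some r) = 0"
    "i < r - 1 \<Longrightarrow> Xdiv r a i (Some (r - a)) = 0"
proof -
  have a0: "0 < a" "a < r" using assms adm_pos by (auto simp: adm_def)
  have mr: "(j + 1) mod r < r" for j using assms(2) by simp
  show "Xdiv r a i (Some 0) = 0"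
    by (rule X_char[OF assms(1) _ _ assms(3), where g="\<lambda>_. 0"])
       (auto simp: E1div_def Ztop(1)[OF assms(1,2)] mr)
  show "Xdiv r a i (Some r) = 0"
    by (rule X_char[OF assms(1) _ _ assms(3), where g="\<lambda>_. 0"])
       (auto simp: E1div_def Ztop(2)[OF assms(1,2)] mr)
  assume ir: "i < r - 1"
  have "Xdiv r a i (Some (r - a)) = (\<lambda>i. if i = r - 1 then 1 else 0) i"
  proof (rule X_char[OF assms(1) _ _ assms(3)])
    show "(if 0 = r - 1 then 1 else 0) = E1div (Some (r - a))" using assms(2) by (simp add: E1div_def)
    fix j assume j: "j < r"
    have ms: "(j + r - a) mod r = (if a \<le> j then j - a else j + r - a)" using modsub[of a r j] a0 j by simp
    have m1: "(j + 1) mod r = (if j + 1 = r then 0 else j + 1)" using j by auto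
    show "(if j = r - 1 then 1 else 0) + Zdiv r a ((j + 1) mod r) (Some (r - a)) =
          Zdiv r a j (Some (r - a)) + (if (j + r - a) mod r = r - 1 then 1 else 0)"
      using Ztop(3)[OF assms(1,2) j] Ztop(3)[OF assms(1,2) mr[of j]] ms m1 a0 j by auto
  qed
  thus "Xdiv r a i (Some (r - a)) = 0" using ir by simp
qed


lemma HL: fixes m x y c :: nat
  assumes "0 < m" "(y + c) mod m = x mod m" "c < m"
  shows "(x + m - c) mod m = y mod m"
proof -
  have "x + m - c + c = x + m" using assms(3) by simp
  hence "(x + m - c + c) mod m = (y + c) mod m" using assms(2) by simp
  hence "[x + m - c + c = y + c] (mod m)" by (simp add: cong_def)
  hence "[x + m - c = y] (mod m)" by (simp add: cong_add_rcancel_nat)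
  thus ?thesis by (simp add: cong_def)
qed

lemma aR_lt: "adm r a \<Longrightarrow> 1 < r \<Longrightarrow> aR r a < a"
  using adm_R by (auto simp: adm_def)

lemma aR_dvd: assumes "adm r a" "1 < r" shows "a dvd (r + aR r a)"
proof -
  have a0: "0 < a" using adm_pos[OF assms] .
  have "int a dvd int r + (- int r) mod int a" using a0 by (simp add: mod_0_imp_dvd mod_add_right_eq)
  moreover have "int (aR r a) = (- int r) mod int a" unfolding aR_def using a0 by simp
  ultimately have "int a dvd int (r + aR r a)" by simp
  thus ?thesis by presburger
qed

lemma HR: assumes "adm r a" "1 < r" shows "(x + (r - a)) mod a = (x + a - aR r a) mod a"
proof -
  have a0: "0 < a" using adm_pos[OF assms] .
  have ar: "a < r" using assms by (simp add: adm_def)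
  obtain t where t: "r + aR r a = a * t" using aR_dvd[OF assms] by blast
  have "t \<ge> 1" using t a0 ar by (cases t) auto
  hence eq: "x + (r - a) + aR r a = x + a * (t - 1)" using t ar by (simp add: algebra_simps)
  have "(x + (r - a) + aR r a) mod a = x mod a" unfolding eq by simp
  from HL[OF a0 this aR_lt[OF assms]] show ?thesis by simp
qed

lemma XL: assumes adm: "adm r a" and r1: "1 < r" and j: "j < r - a - 1" and rho: "\<rho> \<in> rays (r - a)"
  shows "Xdiv r a j \<rho> = Xdiv (r - a) (r mod (r - a)) j \<rho>"
proof -
  define rp where "rp = r - a"
  define aL where "aL = r mod rp"
  have a0: "0 < a" and ar: "a < r" using adm adm_pos[OF adm r1] by (auto simp: adm_def)
  have admL: "adm rp aL" unfolding rp_def aL_def by (rule adm_L[OF adm r1])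
  have rp0: "0 < rp" and aLrp: "aL < rp" using admL by (auto simp: adm_def)
  have amod: "a mod rp = aL"
  proof -
    have "r = a + rp" unfolding rp_def using ar by simp
    thus ?thesis unfolding aL_def by simp
  qed
  define X' where "X' = (\<lambda>n. Xdiv rp aL n \<rho>)"
  define Z' where "Z' = (\<lambda>n. Zdiv rp aL n \<rho>)"
  have subeq: "X' n + Z' ((n + 1) mod rp) = Z' n + X' ((n + rp - aL) mod rp)" if "n < rp" for n
    unfolding X'_def Z'_def using Xdiv_eq[OF admL that] .
  have Zb: "Zdiv r a i \<rho> = (if a \<le> i then Z' (i mod rp) else 0)" if "i < r" for i
    unfolding Z'_def rp_def aL_def using ZL[OF adm r1 that rho] .
  define g where "g i = (if i = r - 1 then X' (rp - 1) + Z' ((r - 1) mod rp) else X' (i mod rp))" for i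
  have "Xdiv r a j \<rho> = g j"
  proof (rule X_char[OF adm])
    show "g 0 = E1div \<rho>" unfolding g_def X'_def using r1 Xdiv0[OF admL] by simp
    show "j < r" using j by simp
    fix i assume ir: "i < r"
    have mr1: "(i + 1) mod r < r" using ir by simp
    have ms: "(i + r - a) mod r = (if a \<le> i then i - a else i + r - a)" using modsub[of a r i] ar ir by simp
    consider (A) "i = r - 1" | (B) "a \<le> i" "i < r - 1" | (C) "i + 1 < a" | (D) "i + 1 = a"
      using ir by linarith
    thus "g i + Zdiv r a ((i + 1) mod r) \<rho> = Zdiv r a i \<rho> + g ((i + r - a) mod r)"
    proof cases
      case A
      have e1: "(i + 1) mod r = 0" using A r1 by simp
      have e2: "(i + r - a) mod r = rp - 1" using ms A ar unfolding rp_def by simp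
      have e3: "rp - 1 \<noteq> r - 1" unfolding rp_def using a0 ar by simp
      show ?thesis using A e1 e2 e3 Zb[OF ir] Zb[of 0] a0 ar r1 rp0 unfolding g_def by simp
    next
      case B
      have e1: "(i + 1) mod r = i + 1" using B by simp
      have e2: "(i + r - a) mod r = i - a" using ms B by simp
      have e3: "i - a \<noteq> r - 1" using B by simp
      have e4: "(i mod rp + 1) mod rp = (i + 1) mod rp" by (rule mod_add_left_eq)
      have e5: "(i mod rp + rp - aL) mod rp = (i - a) mod rp"
      proof (rule HL[OF rp0 _ aLrp])
        have "(i - a + aL) mod rp = (i - a + a) mod rp" using amod by (metis mod_add_right_eq)
        thus "(i - a + aL) mod rp = i mod rp mod rp" using B by simp
      qed
      have se: "X' (i mod rp) + Z' ((i + 1) mod rp) = Z' (i mod rp) + X' ((i - a) mod rp)"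
        using subeq[of "i mod rp"] rp0 e4 e5 by simp
      show ?thesis using B e1 e2 e3 Zb[OF ir] Zb[OF mr1] se unfolding g_def by simp
    next
      case C
      have e1: "(i + 1) mod r = i + 1" using C ar by simp
      have e2: "(i + r - a) mod r = i + rp" using ms C ar unfolding rp_def by simp
      have e3: "i + rp \<noteq> r - 1" "i \<noteq> r - 1" using C ar unfolding rp_def by auto
      show ?thesis using C e1 e2 e3 Zb[OF ir] Zb[OF mr1] unfolding g_def by simp
    next
      case D
      have e1: "(i + 1) mod r = a" using D ar by simp
      have e2: "(i + r - a) mod r = r - 1" using ms D by simp
      have e3: "i \<noteq> r - 1" using D ar by simp
      have e4: "(i mod rp + 1) mod rp = aL" using D amod mod_add_left_eq[of i rp 1] by simp
      have rm: "r - 1 = i + rp" using D ar unfolding rp_def by simp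
      have e6: "(r - 1) mod rp = i mod rp" using rm by simp
      have e5: "(i mod rp + rp - aL) mod rp = (rp - 1) mod rp"
      proof (rule HL[OF rp0 _ aLrp])
        have "(rp - 1 + aL) mod rp = (rp - 1 + a) mod rp" using amod by (metis mod_add_right_eq)
        also have "rp - 1 + a = i + rp" using D rp0 by simp
        finally show "(rp - 1 + aL) mod rp = i mod rp mod rp" by simp
      qed
      have e7: "(rp - 1) mod rp = rp - 1" using rp0 by simp
      have se: "X' (i mod rp) + Z' aL = Z' (i mod rp) + X' (rp - 1)"
        using subeq[of "i mod rp"] rp0 e4 e5 e7 by simp
      show ?thesis using D e1 e2 e3 e6 Zb[OF ir] Zb[OF mr1] se a0 amod unfolding g_def by simp
    qed
  qed
  moreover have "j \<noteq> r - 1" "j mod rp = j" using j unfolding rp_def by auto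
  ultimately show ?thesis unfolding g_def X'_def rp_def aL_def by simp
qed


lemma XR: assumes adm: "adm r a" and r1: "1 < r" and j: "j < a - 1" and rho: "\<rho> \<in> rays a"
  shows "Xdiv r a j (map_option ((+) (r - a)) \<rho>) = Xdiv a (aR r a) j \<rho>"
proof -
  define rp where "rp = r - a"
  define s where "s = aR r a"
  have a0: "0 < a" and ar: "a < r" using adm adm_pos[OF adm r1] by (auto simp: adm_def)
  have admR: "adm a s" unfolding s_def by (rule adm_R[OF adm r1])
  have rp0: "0 < rp" unfolding rp_def using ar by simp
  define X' where "X' = (\<lambda>n. Xdiv a s n \<rho>)"
  define Z' where "Z' = (\<lambda>n. Zdiv a s n \<rho>)"
  define c :: int where "c = (if \<rho> = None then 0 else 1)"
  define sr where "sr = map_option ((+) (r - a)) \<rho>"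
  have subeq: "X' n + Z' ((n + 1) mod a) = Z' n + X' ((n + a - s) mod a)" if "n < a" for n
    unfolding X'_def Z'_def using Xdiv_eq[OF admR that] .
  have Zb: "Zdiv r a i sr = (if i < a then Z' i else c)" if "i < r" for i
    unfolding Z'_def s_def c_def sr_def using ZR[OF adm r1 that rho] .
  have hr: "(x + rp) mod a = (x + a - s) mod a" for x unfolding rp_def s_def by (rule HR[OF adm r1])
  define g where "g i = (if i = r - 1 then X' ((r - 1) mod a) + c - Z' 0 else X' (i mod a))" for i
  have "Xdiv r a j sr = g j"
  proof (rule X_char[OF adm])
    have "E1div sr = E1div \<rho>" unfolding sr_def E1div_def by (cases \<rho>) auto
    thus "g 0 = E1div sr" unfolding g_def X'_def using r1 Xdiv0[OF admR] by simp
    show "j < r" using j ar by simp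
    fix i assume ir: "i < r"
    have mr1: "(i + 1) mod r < r" using ir by simp
    have ms: "(i + r - a) mod r = (if a \<le> i then i - a else i + r - a)" using modsub[of a r i] ar ir by simp
    consider (A) "i = r - 1" | (B) "a \<le> i" "i < r - 1" | (C) "i + 1 < a" | (D) "i + 1 = a"
      using ir by linarith
    thus "g i + Zdiv r a ((i + 1) mod r) sr = Zdiv r a i sr + g ((i + r - a) mod r)"
    proof cases
      case A
      have e1: "(i + 1) mod r = 0" using A r1 by simp
      have e2: "(i + r - a) mod r = rp - 1" using ms A ar unfolding rp_def by simp
      have e3: "rp - 1 \<noteq> r - 1" unfolding rp_def using a0 ar by simp
      have e4: "(r - 1) mod a = (rp - 1) mod a"
      proof -
        have "r - 1 = (rp - 1) + a" unfolding rp_def using ar by simp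
        thus ?thesis by simp
      qed
      have e5: "\<not> r - 1 < a" using ar by simp
      show ?thesis using A e1 e2 e3 e4 e5 Zb[OF ir] Zb[of 0] a0 ar r1 unfolding g_def by simp
    next
      case B
      have e1: "(i + 1) mod r = i + 1" using B by simp
      have e2: "(i + r - a) mod r = i - a" using ms B by simp
      have e3: "i - a \<noteq> r - 1" using B by simp
      have e4: "(i - a) mod a = i mod a"
      proof -
        have "i = (i - a) + a" using B by simp
        hence "i mod a = ((i - a) + a) mod a" by simp
        thus ?thesis by simp
      qed
      show ?thesis using B e1 e2 e3 e4 Zb[OF ir] Zb[OF mr1] unfolding g_def by simp
    next
      case C
      have e1: "(i + 1) mod r = i + 1" using C ar by simp
      have e2: "(i + r - a) mod r = i + rp" using ms C ar unfolding rp_def by simp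
      have e3: "i + rp \<noteq> r - 1" "i \<noteq> r - 1" using C ar unfolding rp_def by auto
      have se: "X' i + Z' (i + 1) = Z' i + X' ((i + rp) mod a)"
        using subeq[of i] C hr[of i] by simp
      show ?thesis using C e1 e2 e3 Zb[OF ir] Zb[OF mr1] se unfolding g_def by simp
    next
      case D
      have e1: "(i + 1) mod r = a" using D ar by simp
      have e2: "(i + r - a) mod r = r - 1" using ms D by simp
      have e3: "i \<noteq> r - 1" using D ar by simp
      have rm: "r - 1 = i + rp" using D ar unfolding rp_def by simp
      have se: "X' i + Z' 0 = Z' i + X' ((r - 1) mod a)"
        using subeq[of i] D hr[of i] rm by simp
      show ?thesis using D e1 e2 e3 Zb[OF ir] Zb[OF mr1] se a0 ar unfolding g_def by simp
    qed
  qed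
  moreover have "j \<noteq> r - 1" "j mod a = j" using j ar by auto
  ultimately show ?thesis unfolding g_def X'_def sr_def s_def by simp
qed


lemma crt_eq: fixes m n x y :: int
  assumes "0 < m" "0 < n" "coprime m n" "m dvd (x - y)" "n dvd (x - y)"
    "0 \<le> x" "x < m * n" "0 \<le> y" "y < m * n"
  shows "x = y"
proof -
  have "m * n dvd (x - y)" using assms(3-5) by (simp add: divides_mult)
  hence "[x = y] (mod m * n)" by (simp add: cong_iff_dvd_diff)
  thus ?thesis using assms(6-9) cong_less_imp_eq_int by blast
qed

lemma pvec_c1: "c1 (pvec r a k) = of_int ((- int k * binv r a) mod int r) / of_nat r"
  by (simp add: pvec_def c1_def)
lemma pvec_c2: "c2 (pvec r a k) = (of_nat r - of_nat k) / of_nat r"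
  by (simp add: pvec_def c2_def)
lemma pvec_c3: "c3 (pvec r a k) = of_nat k / of_nat r"
  by (simp add: pvec_def c3_def)

lemma vec_eq: "c1 u = c1 v \<Longrightarrow> c2 u = c2 v \<Longrightarrow> c3 u = c3 v \<Longrightarrow> u = (v::vec3)"
  by (cases u, cases v) (simp add: c1_def c2_def c3_def)

lemma lin3_c: "c1 (lin3 u v w x) = c1 x * c1 u + c2 x * c1 v + c3 x * c1 w"
  "c2 (lin3 u v w x) = c1 x * c2 u + c2 x * c2 v + c3 x * c2 w"
  "c3 (lin3 u v w x) = c1 x * c3 u + c2 x * c3 v + c3 x * c3 w"
  by (simp_all add: lin3_def c1_def c2_def c3_def)

lemma e_c: "c1 e1 = 1" "c2 e1 = 0" "c3 e1 = 0" "c1 e2 = 0" "c2 e2 = 1" "c3 e2 = 0"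
  "c1 e3 = 0" "c2 e3 = 0" "c3 e3 = 1"
  by (simp_all add: e1_def e2_def e3_def c1_def c2_def c3_def)

lemma lin3_e1: "lin3 e1 v w e1 = e1"
  by (rule vec_eq) (simp_all add: lin3_c e_c)

lemma pvec0: "0 < r \<Longrightarrow> pvec r a 0 = e2"
  by (rule vec_eq) (simp_all add: pvec_c1 pvec_c2 pvec_c3 e_c)

lemma pvecr: "0 < r \<Longrightarrow> pvec r a r = e3"
  by (rule vec_eq) (simp_all add: pvec_c1 pvec_c2 pvec_c3 e_c)

lemma rayvec_simps: "rayvec r a None = e1" "rayvec r a (Some k) = pvec r a k"
  by (simp_all add: rayvec_def)

lemma rayvec_inj: assumes "0 < r" "\<rho>1 \<in> rays r" "\<rho>2 \<in> rays r" "rayvec r a \<rho>1 = rayvec r a \<rho>2"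
  shows "\<rho>1 = \<rho>2"
proof -
  have ne: "pvec r a k \<noteq> e1" for k
  proof
    assume "pvec r a k = e1"
    hence "c2 (pvec r a k) = 0" "c3 (pvec r a k) = 0" by (simp_all add: e_c)
    hence "of_nat r - of_nat k = (0::rat)" "of_nat k = (0::rat)" using assms(1) by (simp_all add: pvec_c2 pvec_c3)
    thus False using assms(1) by simp
  qed
  have pk: "pvec r a k = pvec r a k' \<Longrightarrow> k = k'" for k k'
  proof -
    assume "pvec r a k = pvec r a k'"
    hence "c3 (pvec r a k) = c3 (pvec r a k')" by simp
    thus "k = k'" using assms(1) by (simp add: pvec_c3)
  qed
  show ?thesis using assms(4) ne pk
    by (cases \<rho>1; cases \<rho>2) (auto simp: rayvec_simps dest: sym)
qed

lemma pvec_rp_c1: assumes "adm r a" "1 < r"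
  shows "c1 (pvec r a (r - a)) = 1 / of_nat r"
proof -
  have ar: "a < r" using assms by (simp add: adm_def)
  have b: "[int a * binv r a = 1] (mod int r)" by (rule binv[OF assms(1)])
  have "[- int (r - a) * binv r a = int a * binv r a - int r * binv r a] (mod int r)"
    using ar by (simp add: of_nat_diff algebra_simps)
  moreover have "[int a * binv r a - int r * binv r a = int a * binv r a] (mod int r)"
    by (simp add: cong_iff_dvd_diff)
  ultimately have "[- int (r - a) * binv r a = 1] (mod int r)" using b cong_trans by blast
  hence "(- int (r - a) * binv r a) mod int r = 1" using assms(2) by (simp add: cong_def)
  thus ?thesis by (simp add: pvec_c1)
qed


lemma key_L: assumes adm: "adm r a" and r1: "1 < r" and k: "k \<le> r - a"
  shows "int r * ((- int k * binv (r - a) (r mod (r - a))) mod int (r - a)) + int k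
       = int (r - a) * ((- int k * binv r a) mod int r)"
proof -
  define rp where "rp = r - a"
  define aL where "aL = r mod rp"
  define b where "b = binv r a"
  define b' where "b' = binv rp aL"
  define U where "U = (- int k * b') mod int rp"
  define V where "V = (- int k * b) mod int r"
  have a0: "0 < a" and ar: "a < r" using adm adm_pos[OF adm r1] by (auto simp: adm_def)
  have admL: "adm rp aL" unfolding rp_def aL_def by (rule adm_L[OF adm r1])
  have rp0: "0 < rp" and rpr: "rp < r" using a0 ar unfolding rp_def by auto
  have "coprime r rp"
    using coprime_r_diff[of r a] adm ar unfolding rp_def adm_def by simp
  hence cop: "coprime (int rp) (int r)" by (simp only: coprime_int_iff coprime_commute)
  obtain Q where Q: "U = - int k * b' - int rp * Q"
    unfolding U_def by (metis minus_div_mult_eq_mod mult.commute)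
  obtain Q2 where Q2: "V = - int k * b - int r * Q2"
    unfolding V_def by (metis minus_div_mult_eq_mod mult.commute)
  obtain D where D: "int r = int aL + int rp * D"
  proof -
    have "r = aL + rp * (r div rp)" unfolding aL_def by simp
    hence "int r = int aL + int rp * int (r div rp)" by (metis of_nat_add of_nat_mult)
    thus ?thesis using that by blast
  qed
  obtain t where t: "int aL * b' - 1 = int rp * t"
    using binv[OF admL] unfolding b'_def by (metis cong_iff_dvd_diff dvd_def)
  obtain t2 where t2: "int a * b - 1 = int r * t2"
    using binv[OF adm] unfolding b_def by (metis cong_iff_dvd_diff dvd_def)
  have P: "int rp = int r - int a" unfolding rp_def using ar by simp
  have d1: "int r * U + int k - int rp * V
     = int rp * (- int k * t - int aL * Q - D * int k * b' - int rp * D * Q - V)"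
  proof -
    have "int r * U + int k = (int aL + int rp * D) * (- int k * b' - int rp * Q) + int k"
      using D Q by simp
    also have "\<dots> = - int k * (int aL * b' - 1) - int rp * (int aL * Q + D * int k * b' + int rp * D * Q)"
      by (simp add: algebra_simps)
    also have "\<dots> = - int k * (int rp * t) - int rp * (int aL * Q + D * int k * b' + int rp * D * Q)"
      using t by simp
    finally show ?thesis by (simp add: algebra_simps)
  qed
  have d2: "int r * U + int k - int rp * V
     = int r * (U - int k * t2 + int k * b + int r * Q2 - int a * Q2)"
  proof -
    have "int r * U + int k - int rp * V = int r * U + int k - (int r - int a) * (- int k * b - int r * Q2)"
      using P Q2 by simp
    also have "\<dots> = int r * U - int k * (int a * b - 1) + int r * (int k * b + int r * Q2 - int a * Q2)"
      by (simp add: algebra_simps)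
    also have "\<dots> = int r * U - int k * (int r * t2) + int r * (int k * b + int r * Q2 - int a * Q2)"
      using t2 by simp
    finally show ?thesis by (simp add: algebra_simps)
  qed
  have U0: "0 \<le> U" "U < int rp" unfolding U_def using rp0 by simp_all
  have V0: "0 \<le> V" "V < int r" unfolding V_def using ar by simp_all
  have x1: "int r * U \<le> int r * (int rp - 1)" using U0 by (intro mult_left_mono) auto
  have y1: "int rp * V \<le> int rp * (int r - 1)" using V0 by (intro mult_left_mono) auto
  have "int r * U + int k = int rp * V"
  proof (rule crt_eq[OF _ _ cop])
    show "0 < int rp" "0 < int r" using rp0 ar by auto
    show "int rp dvd int r * U + int k - int rp * V" unfolding d1 by simp
    show "int r dvd int r * U + int k - int rp * V" unfolding d2 by simp
    show "0 \<le> int r * U + int k" using U0 by simp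
    show "0 \<le> int rp * V" using V0 by simp
    show "int r * U + int k < int rp * int r" using x1 k rpr unfolding rp_def by (simp add: algebra_simps)
    show "int rp * V < int rp * int r" using V0 rp0 by simp
  qed
  thus ?thesis unfolding U_def V_def b_def b'_def rp_def aL_def .
qed


lemma key_R: assumes adm: "adm r a" and r1: "1 < r" and k: "k \<le> a"
  shows "int r * ((- int k * binv a (aR r a)) mod int a) + (int a - int k)
       = int a * ((- int (r - a + k) * binv r a) mod int r)"
proof -
  define s where "s = aR r a"
  define b where "b = binv r a"
  define bs where "bs = binv a s"
  define U where "U = (- int k * bs) mod int a"
  define V where "V = (- int (r - a + k) * b) mod int r"
  have a0: "0 < a" and ar: "a < r" using adm adm_pos[OF adm r1] by (auto simp: adm_def)
  have admR: "adm a s" unfolding s_def by (rule adm_R[OF adm r1])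
  have cop: "coprime (int a) (int r)" using adm unfolding adm_def by (simp add: coprime_commute)
  obtain Q where Q: "U = - int k * bs - int a * Q"
    unfolding U_def by (metis minus_div_mult_eq_mod mult.commute)
  obtain Q2 where Q2: "V = - int (r - a + k) * b - int r * Q2"
    unfolding V_def by (metis minus_div_mult_eq_mod mult.commute)
  obtain t3 where t3: "r + s = a * t3" using aR_dvd[OF adm r1] unfolding s_def by blast
  have t3i: "int r = int a * int t3 - int s" using t3 by (metis add_diff_cancel_right' of_nat_add of_nat_mult)
  obtain t where t: "int s * bs - 1 = int a * t"
    using binv[OF admR] unfolding bs_def by (metis cong_iff_dvd_diff dvd_def)
  obtain t2 where t2: "int a * b - 1 = int r * t2"
    using binv[OF adm] unfolding b_def by (metis cong_iff_dvd_diff dvd_def)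
  have P: "int (r - a + k) = int r - int a + int k" using ar by simp
  have d1: "int r * U + (int a - int k) - int a * V
     = int a * (int k * t - int t3 * int k * bs - int a * int t3 * Q + int s * Q + 1 - V)"
  proof -
    have "int r * U + (int a - int k) = (int a * int t3 - int s) * (- int k * bs - int a * Q) + (int a - int k)"
      using t3i Q by simp
    also have "\<dots> = int k * (int s * bs - 1) + int a * (- int t3 * int k * bs - int a * int t3 * Q + int s * Q + 1)"
      by (simp add: algebra_simps)
    also have "\<dots> = int k * (int a * t) + int a * (- int t3 * int k * bs - int a * int t3 * Q + int s * Q + 1)"
      using t by simp
    finally show ?thesis by (simp add: algebra_simps)
  qed
  have d2: "int r * U + (int a - int k) - int a * V
     = int r * (U - (int a - int k) * t2 + int a * b + int a * Q2)"
  proof -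
    have "int r * U + (int a - int k) - int a * V
        = int r * U + (int a - int k) - int a * (- (int r - int a + int k) * b - int r * Q2)"
      using P Q2 by simp
    also have "\<dots> = int r * U - (int a - int k) * (int a * b - 1) + int r * (int a * b + int a * Q2)"
      by (simp add: algebra_simps)
    also have "\<dots> = int r * U - (int a - int k) * (int r * t2) + int r * (int a * b + int a * Q2)"
      using t2 by simp
    finally show ?thesis by (simp add: algebra_simps)
  qed
  have U0: "0 \<le> U" "U < int a" unfolding U_def using a0 by simp_all
  have V0: "0 \<le> V" "V < int r" unfolding V_def using ar by simp_all
  have x1: "int r * U \<le> int r * (int a - 1)" using U0 by (intro mult_left_mono) auto
  have "int r * U + (int a - int k) = int a * V"
  proof (rule crt_eq[OF _ _ cop])
    show "0 < int a" "0 < int r" using a0 ar by auto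
    show "int a dvd int r * U + (int a - int k) - int a * V" unfolding d1 by simp
    show "int r dvd int r * U + (int a - int k) - int a * V" unfolding d2 by simp
    show "0 \<le> int r * U + (int a - int k)" using U0 k by simp
    show "0 \<le> int a * V" using V0 by simp
    show "int r * U + (int a - int k) < int a * int r" using x1 k ar by (simp add: algebra_simps)
    show "int a * V < int a * int r" using V0 a0 by simp
  qed
  thus ?thesis unfolding U_def V_def b_def bs_def s_def .
qed

lemma fL: "(R::rat) \<noteq> 0 \<Longrightarrow> P \<noteq> 0 \<Longrightarrow> R * U + K = P * V \<Longrightarrow> U / P + K / P * (1 / R) = V / R"
  by (simp add: field_simps)

lemma fR: "(R::rat) \<noteq> 0 \<Longrightarrow> A \<noteq> 0 \<Longrightarrow> R * U + (A - K) = A * V \<Longrightarrow> U / A + (A - K) / A * (1 / R) = V / R"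
  by (simp add: field_simps)

lemma gL2: "(R::rat) \<noteq> 0 \<Longrightarrow> P \<noteq> 0 \<Longrightarrow> (P - K) / P + K / P * ((R - P) / R) = (R - K) / R"
  by (simp add: field_simps)

lemma gL3: "(R::rat) \<noteq> 0 \<Longrightarrow> P \<noteq> 0 \<Longrightarrow> K / P * (P / R) = K / R"
  by (simp add: field_simps)

lemma L_map: assumes adm: "adm r a" and r1: "1 < r" and k: "k \<le> r - a"
  shows "lin3 e1 e2 (pvec r a (r - a)) (pvec (r - a) (r mod (r - a)) k) = pvec r a k"
proof (rule vec_eq)
  have a0: "0 < a" and ar: "a < r" using adm adm_pos[OF adm r1] by (auto simp: adm_def)
  have rp0: "(of_nat (r - a) :: rat) \<noteq> 0" and r0: "(of_nat r :: rat) \<noteq> 0" using ar by auto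
  define U where "U = (- int k * binv (r - a) (r mod (r - a))) mod int (r - a)"
  define V where "V = (- int k * binv r a) mod int r"
  have key: "int r * U + int k = int (r - a) * V" unfolding U_def V_def by (rule key_L[OF adm r1 k])
  have key': "of_nat r * (of_int U :: rat) + of_nat k = of_nat (r - a) * of_int V"
  proof -
    have "(of_int (int r * U + int k) :: rat) = of_int (int (r - a) * V)" using key by (simp only:)
    thus ?thesis by (simp only: of_int_add of_int_mult of_int_of_nat_eq)
  qed
  have "c1 (lin3 e1 e2 (pvec r a (r - a)) (pvec (r - a) (r mod (r - a)) k))
     = c1 (pvec (r - a) (r mod (r - a)) k) + c3 (pvec (r - a) (r mod (r - a)) k) * (1 / of_nat r)"
    by (simp add: lin3_c e_c pvec_rp_c1[OF adm r1])
  also have "\<dots> = of_int U / of_nat (r - a) + of_nat k / of_nat (r - a) * (1 / of_nat r)"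
    by (simp only: pvec_c1 pvec_c3 U_def)
  also have "\<dots> = of_int V / of_nat r" by (rule fL[OF r0 rp0 key'])
  also have "\<dots> = c1 (pvec r a k)" by (simp only: pvec_c1 V_def)
  finally show "c1 (lin3 e1 e2 (pvec r a (r - a)) (pvec (r - a) (r mod (r - a)) k)) = c1 (pvec r a k)" .
  have "c2 (lin3 e1 e2 (pvec r a (r - a)) (pvec (r - a) (r mod (r - a)) k))
     = (of_nat (r - a) - of_nat k) / of_nat (r - a) + of_nat k / of_nat (r - a) * ((of_nat r - of_nat (r - a)) / of_nat r)"
    by (simp only: lin3_c e_c pvec_c2 pvec_c3 mult_zero_right mult_1_right add_0)
  also have "\<dots> = c2 (pvec r a k)" unfolding pvec_c2 by (rule gL2[OF r0 rp0])
  finally show "c2 (lin3 e1 e2 (pvec r a (r - a)) (pvec (r - a) (r mod (r - a)) k)) = c2 (pvec r a k)" .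
  have "c3 (lin3 e1 e2 (pvec r a (r - a)) (pvec (r - a) (r mod (r - a)) k))
     = of_nat k / of_nat (r - a) * (of_nat (r - a) / of_nat r)"
    by (simp only: lin3_c e_c pvec_c2 pvec_c3 mult_zero_right mult_1_right add_0)
  also have "\<dots> = c3 (pvec r a k)" unfolding pvec_c3 by (rule gL3[OF r0 rp0])
  finally show "c3 (lin3 e1 e2 (pvec r a (r - a)) (pvec (r - a) (r mod (r - a)) k)) = c3 (pvec r a k)" .
qed

lemma R_map: assumes adm: "adm r a" and r1: "1 < r" and k: "k \<le> a"
  shows "lin3 e1 (pvec r a (r - a)) e3 (pvec a (aR r a) k) = pvec r a (r - a + k)"
proof (rule vec_eq)
  have a0: "0 < a" and ar: "a < r" using adm adm_pos[OF adm r1] by (auto simp: adm_def)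
  have a0': "(of_nat a :: rat) \<noteq> 0" and r0: "(of_nat r :: rat) \<noteq> 0" using a0 ar by auto
  have rp: "(of_nat (r - a) :: rat) = of_nat r - of_nat a" using ar by (simp add: of_nat_diff)
  have rpk: "(of_nat (r - a + k) :: rat) = of_nat r - of_nat a + of_nat k" using ar by (simp add: of_nat_diff)
  define U where "U = (- int k * binv a (aR r a)) mod int a"
  define V where "V = (- int (r - a + k) * binv r a) mod int r"
  have key: "int r * U + (int a - int k) = int a * V" unfolding U_def V_def by (rule key_R[OF adm r1 k])
  have key': "of_nat r * (of_int U :: rat) + (of_nat a - of_nat k) = of_nat a * of_int V"
  proof -
    have "(of_int (int r * U + (int a - int k)) :: rat) = of_int (int a * V)" using key by (simp only:)
    thus ?thesis by (simp only: of_int_add of_int_diff of_int_mult of_int_of_nat_eq)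
  qed
  have "c1 (lin3 e1 (pvec r a (r - a)) e3 (pvec a (aR r a) k))
     = c1 (pvec a (aR r a) k) + c2 (pvec a (aR r a) k) * (1 / of_nat r)"
    by (simp add: lin3_c e_c pvec_rp_c1[OF adm r1])
  also have "\<dots> = of_int U / of_nat a + (of_nat a - of_nat k) / of_nat a * (1 / of_nat r)"
    by (simp only: pvec_c1 pvec_c2 U_def)
  also have "\<dots> = of_int V / of_nat r" by (rule fR[OF r0 a0' key'])
  also have "\<dots> = c1 (pvec r a (r - a + k))" by (simp only: pvec_c1 V_def)
  finally show "c1 (lin3 e1 (pvec r a (r - a)) e3 (pvec a (aR r a) k)) = c1 (pvec r a (r - a + k))" .
  show "c2 (lin3 e1 (pvec r a (r - a)) e3 (pvec a (aR r a) k)) = c2 (pvec r a (r - a + k))"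
    using a0' r0 unfolding lin3_c e_c pvec_c2 pvec_c3 pvec_c1 rp rpk
    by (simp add: field_simps)
  show "c3 (lin3 e1 (pvec r a (r - a)) e3 (pvec a (aR r a) k)) = c3 (pvec r a (r - a + k))"
    using a0' r0 unfolding lin3_c e_c pvec_c2 pvec_c3 pvec_c1 rp rpk
    by (simp add: field_simps)
qed


lemma dc_unfold: assumes "adm r a" "1 < r"
  shows "danilov_cones r a = {{e2, e3, pvec r a (r - a)}}
        \<union> (\<lambda>C. lin3 e1 e2 (pvec r a (r - a)) ` C) ` danilov_cones (r - a) (r mod (r - a))
        \<union> (\<lambda>C. lin3 e1 (pvec r a (r - a)) e3 ` C) ` danilov_cones a (aR r a)"
proof -
  have a0: "0 < a" and ar: "a < r" using assms adm_pos[OF assms] by (auto simp: adm_def)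
  show ?thesis using danilov_cones.simps[of r a] a0 ar unfolding aR_def by simp
qed

lemma dc_one: "danilov_cones 1 a = {{e1, e2, e3}}"
  using danilov_cones.simps[of 1 a] by simp

lemma L_ray: assumes "adm r a" "1 < r" "\<rho> \<in> rays (r - a)"
  shows "lin3 e1 e2 (pvec r a (r - a)) (rayvec (r - a) (r mod (r - a)) \<rho>) = rayvec r a \<rho>"
  using assms L_map[OF assms(1,2)] by (cases \<rho>) (auto simp: rayvec_simps lin3_e1 rays_iff)

lemma R_ray: assumes "adm r a" "1 < r" "\<rho> \<in> rays a"
  shows "lin3 e1 (pvec r a (r - a)) e3 (rayvec a (aR r a) \<rho>) = rayvec r a (map_option ((+) (r - a)) \<rho>)"
  using assms R_map[OF assms(1,2)] by (cases \<rho>) (auto simp: rayvec_simps lin3_e1 rays_iff)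

lemma rays_L: "a \<le> r \<Longrightarrow> \<rho> \<in> rays (r - a) \<Longrightarrow> \<rho> \<in> rays r"
  by (auto simp: rays_iff)

lemma rays_R: "a \<le> r \<Longrightarrow> \<rho> \<in> rays a \<Longrightarrow> map_option ((+) (r - a)) \<rho> \<in> rays r"
  by (auto simp: rays_iff)

lemma cone_rays: "adm r a \<Longrightarrow> \<sigma> \<in> danilov_cones r a \<Longrightarrow> \<sigma> \<subseteq> rayvec r a ` rays r"
proof (induction r arbitrary: a \<sigma> rule: less_induct)
  case (less r)
  have r0: "0 < r" and ar: "a < r" using less.prems by (auto simp: adm_def)
  show ?case
  proof (cases "r = 1")
    case True
    hence "\<sigma> = {e1, e2, e3}" using less.prems dc_one by simp
    moreover have "e1 = rayvec r a None" "e2 = rayvec r a (Some 0)" "e3 = rayvec r a (Some r)"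
      using r0 by (simp_all add: rayvec_simps pvec0 pvecr)
    moreover have "None \<in> rays r" "Some 0 \<in> rays r" "Some r \<in> rays r" by (simp_all add: rays_iff)
    ultimately show ?thesis by auto
  next
    case False
    hence r1: "1 < r" using r0 by simp
    have a0: "0 < a" using adm_pos[OF less.prems(1) r1] .
    note U = less.prems(2)[unfolded dc_unfold[OF less.prems(1) r1]]
    show ?thesis
    proof -
      { assume "\<sigma> = {e2, e3, pvec r a (r - a)}"
        moreover have "e2 = rayvec r a (Some 0)" "e3 = rayvec r a (Some r)" "pvec r a (r - a) = rayvec r a (Some (r - a))"
          using r0 by (simp_all add: rayvec_simps pvec0 pvecr)
        moreover have "Some 0 \<in> rays r" "Some r \<in> rays r" "Some (r - a) \<in> rays r" by (simp_all add: rays_iff)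
        ultimately have ?thesis by auto }
      moreover
      { fix \<sigma>' assume s: "\<sigma> = lin3 e1 e2 (pvec r a (r - a)) ` \<sigma>'" "\<sigma>' \<in> danilov_cones (r - a) (r mod (r - a))"
        have "\<sigma>' \<subseteq> rayvec (r - a) (r mod (r - a)) ` rays (r - a)"
          by (rule less.IH[OF _ adm_L[OF less.prems(1) r1] s(2)]) (use a0 ar in simp)
        hence ?thesis unfolding s(1) using L_ray[OF less.prems(1) r1] rays_L[of a r] ar by fastforce }
      moreover
      { fix \<sigma>' assume s: "\<sigma> = lin3 e1 (pvec r a (r - a)) e3 ` \<sigma>'" "\<sigma>' \<in> danilov_cones a (aR r a)"
        have "\<sigma>' \<subseteq> rayvec a (aR r a) ` rays a"
          by (rule less.IH[OF _ adm_R[OF less.prems(1) r1] s(2)]) (use ar in simp)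
        hence ?thesis unfolding s(1) using R_ray[OF less.prems(1) r1] rays_R[of a r] ar by fastforce }
      ultimately show ?thesis using U by blast
    qed
  qed
qed

definition Erel :: "nat \<Rightarrow> nat \<Rightarrow> vec3 set \<Rightarrow> nat \<Rightarrow> nat \<Rightarrow> bool" where
  "Erel r a \<sigma> = (\<lambda>i j. \<exists>\<alpha>. quiver_arrow r \<alpha> \<and> \<alpha> \<noteq> ArrX (r - 1) \<and> distinguished r a \<sigma> \<alpha> \<and>
       ((arrow_tail \<alpha> = i \<and> arrow_head r a \<alpha> = j) \<or> (arrow_tail \<alpha> = j \<and> arrow_head r a \<alpha> = i)))"

lemma Erel_sym: "Erel r a \<sigma> i j \<Longrightarrow> Erel r a \<sigma> j i"
  unfolding Erel_def by blast

lemma Erels_sym: "(Erel r a \<sigma>)\<^sup>*\<^sup>* i j \<Longrightarrow> (Erel r a \<sigma>)\<^sup>*\<^sup>* j i"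
proof (induction rule: rtranclp_induct)
  case base thus ?case by simp
next
  case (step y z)
  thus ?case using Erel_sym converse_rtranclp_into_rtranclp by metis
qed

lemma Erel_arrow: "quiver_arrow r \<alpha> \<Longrightarrow> \<alpha> \<noteq> ArrX (r - 1) \<Longrightarrow> distinguished r a \<sigma> \<alpha> \<Longrightarrow>
   (Erel r a \<sigma>)\<^sup>*\<^sup>* (arrow_tail \<alpha>) (arrow_head r a \<alpha>)"
  unfolding Erel_def by (rule r_into_rtranclp) blast

lemma Erels_lift: assumes "\<And>x y. P x y \<Longrightarrow> (Erel r a \<sigma>)\<^sup>*\<^sup>* x y" "P\<^sup>*\<^sup>* u v"
  shows "(Erel r a \<sigma>)\<^sup>*\<^sup>* u v"
  using assms(2) by (induction rule: rtranclp_induct) (auto intro: rtranclp_trans assms(1))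


lemma conn_top: assumes adm: "adm r a" and r1: "1 < r" and sig: "\<sigma> = {e2, e3, pvec r a (r - a)}"
  and u: "u < r" and v: "v < r"
  shows "(Erel r a \<sigma>)\<^sup>*\<^sup>* u v"
proof -
  have r0: "0 < r" and ar: "a < r" using adm by (auto simp: adm_def)
  have rs: "\<rho> = Some 0 \<or> \<rho> = Some r \<or> \<rho> = Some (r - a)"
    if "\<rho> \<in> rays r" "rayvec r a \<rho> \<in> \<sigma>" for \<rho>
  proof -
    have "e2 = rayvec r a (Some 0)" "e3 = rayvec r a (Some r)" "pvec r a (r - a) = rayvec r a (Some (r - a))"
      using r0 by (simp_all add: rayvec_simps pvec0 pvecr)
    moreover have "Some 0 \<in> rays r" "Some r \<in> rays r" "Some (r - a) \<in> rays r" by (simp_all add: rays_iff)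
    ultimately show ?thesis using that rayvec_inj[OF r0] sig by (metis insert_iff empty_iff)
  qed
  have dist: "distinguished r a \<sigma> (ArrX i)" if "i < r - 1" for i
  proof -
    have ir: "i < r" using that by simp
    show ?thesis unfolding distinguished_def
    proof (intro ballI impI)
      fix \<rho> assume "\<rho> \<in> rays r" "rayvec r a \<rho> \<in> \<sigma>"
      thus "arrow_div r a (ArrX i) \<rho> = 0" using rs Xtop[OF adm r1 ir] that by auto
    qed
  qed
  have path: "(Erel r a \<sigma>)\<^sup>*\<^sup>* 0 i" if "i < r" for i
    using that
  proof (induction i)
    case 0 show ?case by simp
  next
    case (Suc i)
    have "(Erel r a \<sigma>)\<^sup>*\<^sup>* (arrow_tail (ArrX i)) (arrow_head r a (ArrX i))"
      by (rule Erel_arrow) (use Suc.prems dist[of i] in \<open>auto simp: quiver_arrow_def\<close>)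
    hence "(Erel r a \<sigma>)\<^sup>*\<^sup>* i (Suc i)" using Suc.prems by simp
    thus ?case using Suc by (meson Suc_lessD rtranclp_trans)
  qed
  show ?thesis using path[OF u] path[OF v] Erels_sym rtranclp_trans by metis
qed


lemma amod_L: "(a::nat) < r \<Longrightarrow> a mod (r - a) = r mod (r - a)"
proof -
  assume "a < r"
  hence "r = a + (r - a)" by simp
  hence "r mod (r - a) = (a + (r - a)) mod (r - a)" by simp
  thus ?thesis by simp
qed

lemma YL: assumes "adm r a" "1 < r" "j < r - a"
  shows "Ydiv r a j \<rho> = Ydiv (r - a) (r mod (r - a)) j \<rho>"
proof -
  have ar: "a < r" using assms by (simp add: adm_def)
  have e1: "(j + a) mod r = j + a" using assms(3) by simp
  have e2: "tau r a (j + a) = tau (r - a) (r mod (r - a)) ((j + a) mod (r - a))"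
    using tau_rec[OF assms(1,2), of "j + a"] assms(3) by simp
  have e3: "(j + a) mod (r - a) = (j + r mod (r - a)) mod (r - a)"
    using amod_L[OF ar] by (metis mod_add_right_eq)
  show ?thesis unfolding Yval e1 e2 e3 by (rule refl)
qed

lemma conn_L:
  assumes adm: "adm r a" and r1: "1 < r"
    and sd: "\<sigma>' \<in> danilov_cones (r - a) (r mod (r - a))"
    and IH: "\<And>u v. u < r - a \<Longrightarrow> v < r - a \<Longrightarrow> (Erel (r - a) (r mod (r - a)) \<sigma>')\<^sup>*\<^sup>* u v"
    and sig: "\<sigma> = lin3 e1 e2 (pvec r a (r - a)) ` \<sigma>'"
    and u: "u < r" and v: "v < r"
  shows "(Erel r a \<sigma>)\<^sup>*\<^sup>* u v"
proof -
  define rp where "rp = r - a"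
  define aL where "aL = r mod rp"
  have a0: "0 < a" and ar: "a < r" using adm adm_pos[OF adm r1] by (auto simp: adm_def)
  have admL: "adm rp aL" unfolding rp_def aL_def by (rule adm_L[OF adm r1])
  have rp0: "0 < rp" and aLrp: "aL < rp" using admL by (auto simp: adm_def)
  have amod: "a mod rp = aL" unfolding rp_def aL_def using amod_L[OF ar] .
  have cr: "\<sigma>' \<subseteq> rayvec rp aL ` rays rp" using cone_rays[OF admL] sd unfolding rp_def aL_def by simp
  have raysL: "\<rho> \<in> rays rp \<and> rayvec rp aL \<rho> \<in> \<sigma>'" if h1: "\<rho> \<in> rays r" and h2: "rayvec r a \<rho> \<in> \<sigma>" for \<rho>
  proof -
    obtain x where x: "x \<in> \<sigma>'" "rayvec r a \<rho> = lin3 e1 e2 (pvec r a (r - a)) x" using h2 sig by auto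
    then obtain \<rho>' where \<rho>': "\<rho>' \<in> rays rp" "x = rayvec rp aL \<rho>'" using cr by auto
    have "lin3 e1 e2 (pvec r a (r - a)) x = rayvec r a \<rho>'"
      using L_ray[OF adm r1, of \<rho>'] \<rho>' unfolding rp_def aL_def by simp
    moreover have "\<rho>' \<in> rays r" using rays_L[of a r \<rho>'] \<rho>'(1) ar unfolding rp_def by simp
    ultimately have "\<rho> = \<rho>'" using rayvec_inj[of r \<rho> \<rho>' a] h1 x(2) ar by simp
    thus ?thesis using \<rho>' x by simp
  qed
  have distL: "distinguished r a \<sigma> \<alpha>"
    if "\<And>\<rho>. \<rho> \<in> rays rp \<Longrightarrow> rayvec rp aL \<rho> \<in> \<sigma>' \<Longrightarrow> arrow_div r a \<alpha> \<rho> = 0" for \<alpha>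
    unfolding distinguished_def using raysL that by blast
  have cls: "(Erel r a \<sigma>)\<^sup>*\<^sup>* w (w mod rp)" if "w < r" for w
    using that
  proof (induction w rule: less_induct)
    case (less w)
    show ?case
    proof (cases "w < rp")
      case True thus ?thesis by simp
    next
      case False
      define i where "i = w - rp"
      have ia: "i < a" and iw: "i < w" and ir: "i < r" using False less.prems rp0 unfolding i_def rp_def by auto
      have "(Erel r a \<sigma>)\<^sup>*\<^sup>* (arrow_tail (ArrZ i)) (arrow_head r a (ArrZ i))"
      proof (rule Erel_arrow)
        show "quiver_arrow r (ArrZ i)" using ir by (simp add: quiver_arrow_def)
        show "ArrZ i \<noteq> ArrX (r - 1)" by simp
        show "distinguished r a \<sigma> (ArrZ i)"
        proof (rule distL)
          fix \<rho> assume "\<rho> \<in> rays rp"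
          thus "arrow_div r a (ArrZ i) \<rho> = 0" using ZL[OF adm r1 ir, of \<rho>] ia unfolding rp_def by simp
        qed
      qed
      moreover have "(i + r - a) mod r = w" using False less.prems ar unfolding i_def rp_def by simp
      ultimately have e: "(Erel r a \<sigma>)\<^sup>*\<^sup>* i w" by simp
      have "(Erel r a \<sigma>)\<^sup>*\<^sup>* i (i mod rp)" using less.IH[OF iw] ir by simp
      moreover have "i mod rp = w mod rp"
      proof -
        have "w = i + rp" using False unfolding i_def by simp
        thus ?thesis by simp
      qed
      ultimately show ?thesis using e Erels_sym rtranclp_trans by metis
    qed
  qed
  have liftA: "(Erel r a \<sigma>)\<^sup>*\<^sup>* (arrow_tail \<alpha>') (arrow_head rp aL \<alpha>')"
    if q: "quiver_arrow rp \<alpha>'" and nx: "\<alpha>' \<noteq> ArrX (rp - 1)" and dd: "distinguished rp aL \<sigma>' \<alpha>'" for \<alpha>'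
  proof (cases \<alpha>')
    case (ArrX j)
    have j: "j < rp - 1" using q nx ArrX by (auto simp: quiver_arrow_def)
    have "(Erel r a \<sigma>)\<^sup>*\<^sup>* (arrow_tail (ArrX j)) (arrow_head r a (ArrX j))"
    proof (rule Erel_arrow)
      show "quiver_arrow r (ArrX j)" using j ar unfolding rp_def by (simp add: quiver_arrow_def)
      show "ArrX j \<noteq> ArrX (r - 1)" using j ar unfolding rp_def by simp
      show "distinguished r a \<sigma> (ArrX j)"
      proof (rule distL)
        fix \<rho> assume h: "\<rho> \<in> rays rp" "rayvec rp aL \<rho> \<in> \<sigma>'"
        have "Xdiv r a j \<rho> = Xdiv rp aL j \<rho>"
          using XL[OF adm r1, of j \<rho>] j h(1) unfolding rp_def aL_def by simp
        also have "\<dots> = 0" using dd h ArrX unfolding distinguished_def by simp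
        finally show "arrow_div r a (ArrX j) \<rho> = 0" by simp
      qed
    qed
    moreover have "(j + 1) mod r = j + 1" "(j + 1) mod rp = j + 1" using j ar unfolding rp_def by auto
    ultimately show ?thesis using ArrX by simp
  next
    case (ArrY j)
    have j: "j < rp" using q ArrY by (simp add: quiver_arrow_def)
    have "(Erel r a \<sigma>)\<^sup>*\<^sup>* (arrow_tail (ArrY j)) (arrow_head r a (ArrY j))"
    proof (rule Erel_arrow)
      show "quiver_arrow r (ArrY j)" using j ar unfolding rp_def by (simp add: quiver_arrow_def)
      show "ArrY j \<noteq> ArrX (r - 1)" by simp
      show "distinguished r a \<sigma> (ArrY j)"
      proof (rule distL)
        fix \<rho> assume h: "\<rho> \<in> rays rp" "rayvec rp aL \<rho> \<in> \<sigma>'"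
        have "Ydiv r a j \<rho> = Ydiv rp aL j \<rho>"
          using YL[OF adm r1, of j \<rho>] j unfolding rp_def aL_def by simp
        also have "\<dots> = 0" using dd h ArrY unfolding distinguished_def by simp
        finally show "arrow_div r a (ArrY j) \<rho> = 0" by simp
      qed
    qed
    moreover have "(j + a) mod r = j + a" using j unfolding rp_def by simp
    ultimately have e: "(Erel r a \<sigma>)\<^sup>*\<^sup>* j (j + a)" by simp
    have "(Erel r a \<sigma>)\<^sup>*\<^sup>* (j + a) ((j + a) mod rp)" using cls j unfolding rp_def by simp
    moreover have "(j + a) mod rp = (j + aL) mod rp" using amod by (metis mod_add_right_eq)
    ultimately show ?thesis using e ArrY rtranclp_trans by fastforce
  next
    case (ArrZ j)
    have j: "j < rp" using q ArrZ by (simp add: quiver_arrow_def)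
    define i where "i = a + (j + rp - aL) mod rp"
    have ir: "i < r"
    proof -
      have "(j + rp - aL) mod rp < rp" using rp0 by simp
      thus ?thesis unfolding i_def rp_def using ar by linarith
    qed
    have ai: "a \<le> i" unfolding i_def by simp
    have imod: "i mod rp = j"
    proof -
      have "i mod rp = (a + (j + rp - aL)) mod rp" unfolding i_def by (rule mod_add_right_eq)
      also have "\<dots> = (a mod rp + (j + rp - aL)) mod rp" by (rule mod_add_left_eq[symmetric])
      also have "\<dots> = (aL + (j + rp - aL)) mod rp" using amod by simp
      also have "aL + (j + rp - aL) = j + rp" using aLrp by simp
      finally show ?thesis using j by simp
    qed
    have "(Erel r a \<sigma>)\<^sup>*\<^sup>* (arrow_tail (ArrZ i)) (arrow_head r a (ArrZ i))"
    proof (rule Erel_arrow)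
      show "quiver_arrow r (ArrZ i)" using ir by (simp add: quiver_arrow_def)
      show "ArrZ i \<noteq> ArrX (r - 1)" by simp
      show "distinguished r a \<sigma> (ArrZ i)"
      proof (rule distL)
        fix \<rho> assume h: "\<rho> \<in> rays rp" "rayvec rp aL \<rho> \<in> \<sigma>'"
        have "Zdiv r a i \<rho> = Zdiv rp aL j \<rho>"
          using ZL[OF adm r1 ir, of \<rho>] h(1) ai imod unfolding rp_def aL_def by simp
        also have "\<dots> = 0" using dd h ArrZ unfolding distinguished_def by simp
        finally show "arrow_div r a (ArrZ i) \<rho> = 0" by simp
      qed
    qed
    moreover have "(i + r - a) mod r = (j + rp - aL) mod rp"
    proof -
      have "i + r - a = (j + rp - aL) mod rp + r" unfolding i_def using ar by simp
      hence "(i + r - a) mod r = ((j + rp - aL) mod rp) mod r" by simp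
      moreover have "(j + rp - aL) mod rp < r" using rp0 ar unfolding rp_def
        by (meson diff_less less_trans mod_less_divisor a0)
      ultimately show ?thesis by simp
    qed
    ultimately have e: "(Erel r a \<sigma>)\<^sup>*\<^sup>* i ((j + rp - aL) mod rp)" by simp
    have "(Erel r a \<sigma>)\<^sup>*\<^sup>* i j" using cls[OF ir] imod by simp
    hence "(Erel r a \<sigma>)\<^sup>*\<^sup>* j i" by (rule Erels_sym)
    thus ?thesis using e ArrZ rtranclp_trans by fastforce
  qed
  have lift: "(Erel r a \<sigma>)\<^sup>*\<^sup>* x y" if hE: "Erel rp aL \<sigma>' x y" for x y
  proof -
    obtain \<alpha>' where h: "quiver_arrow rp \<alpha>'" "\<alpha>' \<noteq> ArrX (rp - 1)" "distinguished rp aL \<sigma>' \<alpha>'"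
      "(arrow_tail \<alpha>' = x \<and> arrow_head rp aL \<alpha>' = y) \<or> (arrow_tail \<alpha>' = y \<and> arrow_head rp aL \<alpha>' = x)"
      using hE unfolding Erel_def by blast
    thus ?thesis using liftA[OF h(1-3)] Erels_sym by metis
  qed
  have IH': "(Erel rp aL \<sigma>')\<^sup>*\<^sup>* x y" if "x < rp" "y < rp" for x y
    using IH that unfolding rp_def aL_def by blast
  have m: "(Erel r a \<sigma>)\<^sup>*\<^sup>* (u mod rp) (v mod rp)"
    by (rule Erels_lift[OF lift IH']) (simp_all add: rp0)
  show ?thesis using cls[OF u] cls[OF v] m Erels_sym rtranclp_trans by metis
qed


lemma YR: assumes adm: "adm r a" and r1: "1 < r" and j: "j < a"
  shows "Ydiv r a ((j + aR r a) mod a + (r - a)) (map_option ((+) (r - a)) \<rho>) = Ydiv a (aR r a) j \<rho>"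
proof -
  define i where "i = (j + aR r a) mod a"
  have a0: "0 < a" and ar: "a < r" using adm adm_pos[OF adm r1] by (auto simp: adm_def)
  have ia: "i < a" unfolding i_def using a0 by simp
  have e1: "(i + (r - a) + a) mod r = i" using ia ar by simp
  have e2: "tau r a i = (r - a) + tau a (aR r a) i" using tau_rec[OF adm r1, of i] ia ar by simp
  show ?thesis unfolding i_def[symmetric] Yval e1 e2
    by (cases \<rho>) (simp_all add: i_def)
qed

lemma conn_R:
  assumes adm: "adm r a" and r1: "1 < r"
    and sd: "\<sigma>' \<in> danilov_cones a (aR r a)"
    and IH: "\<And>u v. u < a \<Longrightarrow> v < a \<Longrightarrow> (Erel a (aR r a) \<sigma>')\<^sup>*\<^sup>* u v"
    and sig: "\<sigma> = lin3 e1 (pvec r a (r - a)) e3 ` \<sigma>'"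
    and u: "u < r" and v: "v < r"
  shows "(Erel r a \<sigma>)\<^sup>*\<^sup>* u v"
proof -
  define rp where "rp = r - a"
  define s where "s = aR r a"
  define sh where "sh = map_option ((+) rp)"
  have a0: "0 < a" and ar: "a < r" using adm adm_pos[OF adm r1] by (auto simp: adm_def)
  have admR: "adm a s" unfolding s_def by (rule adm_R[OF adm r1])
  have sa: "s < a" using admR by (simp add: adm_def)
  have rp0: "0 < rp" using ar unfolding rp_def by simp
  have cr: "\<sigma>' \<subseteq> rayvec a s ` rays a" using cone_rays[OF admR] sd unfolding s_def by simp
  have hr: "(x + rp) mod a = (x + a - s) mod a" for x unfolding rp_def s_def by (rule HR[OF adm r1])
  have raysR: "\<exists>\<rho>'. \<rho>' \<in> rays a \<and> \<rho> = sh \<rho>' \<and> rayvec a s \<rho>' \<in> \<sigma>'"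
    if h1: "\<rho> \<in> rays r" and h2: "rayvec r a \<rho> \<in> \<sigma>" for \<rho>
  proof -
    obtain x where x: "x \<in> \<sigma>'" "rayvec r a \<rho> = lin3 e1 (pvec r a (r - a)) e3 x" using h2 sig by auto
    then obtain \<rho>' where \<rho>': "\<rho>' \<in> rays a" "x = rayvec a s \<rho>'" using cr by auto
    have "lin3 e1 (pvec r a (r - a)) e3 x = rayvec r a (sh \<rho>')"
      using R_ray[OF adm r1, of \<rho>'] \<rho>' unfolding sh_def rp_def s_def by simp
    moreover have "sh \<rho>' \<in> rays r" using rays_R[of a r \<rho>'] \<rho>'(1) ar unfolding sh_def rp_def by simp
    ultimately have "\<rho> = sh \<rho>'" using rayvec_inj[of r \<rho> "sh \<rho>'" a] h1 x(2) ar by simp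
    thus ?thesis using \<rho>' x by blast
  qed
  have distR: "distinguished r a \<sigma> \<alpha>"
    if hd: "\<And>\<rho>'. \<rho>' \<in> rays a \<Longrightarrow> rayvec a s \<rho>' \<in> \<sigma>' \<Longrightarrow> arrow_div r a \<alpha> (sh \<rho>') = 0" for \<alpha>
    unfolding distinguished_def
  proof (intro ballI impI)
    fix \<rho> assume "\<rho> \<in> rays r" "rayvec r a \<rho> \<in> \<sigma>"
    then obtain \<rho>' where "\<rho>' \<in> rays a" "\<rho> = sh \<rho>'" "rayvec a s \<rho>' \<in> \<sigma>'" using raysR by blast
    thus "arrow_div r a \<alpha> \<rho> = 0" using hd by simp
  qed
  have cls: "(Erel r a \<sigma>)\<^sup>*\<^sup>* w (w mod a)" if "w < r" for w
    using that
  proof (induction w rule: less_induct)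
    case (less w)
    show ?case
    proof (cases "w < a")
      case True thus ?thesis by simp
    next
      case False
      define i where "i = w - a"
      have iw: "i < w" and ir: "i < r" using False less.prems a0 unfolding i_def by auto
      have hi: "tau r a w < rp" using tau_hi[OF adm r1 less.prems] False unfolding rp_def by simp
      have "(Erel r a \<sigma>)\<^sup>*\<^sup>* (arrow_tail (ArrY i)) (arrow_head r a (ArrY i))"
      proof (rule Erel_arrow)
        show "quiver_arrow r (ArrY i)" using ir by (simp add: quiver_arrow_def)
        show "ArrY i \<noteq> ArrX (r - 1)" by simp
        show "distinguished r a \<sigma> (ArrY i)"
        proof (rule distR)
          fix \<rho>' assume "\<rho>' \<in> rays a"
          have "(i + a) mod r = w" using False less.prems unfolding i_def by simp
          thus "arrow_div r a (ArrY i) (sh \<rho>') = 0" using hi unfolding sh_def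
            by (cases \<rho>') (auto simp: Yval)
        qed
      qed
      moreover have "(i + a) mod r = w" using False less.prems unfolding i_def by simp
      ultimately have e: "(Erel r a \<sigma>)\<^sup>*\<^sup>* i w" by simp
      have "(Erel r a \<sigma>)\<^sup>*\<^sup>* i (i mod a)" using less.IH[OF iw] ir by simp
      moreover have "i mod a = w mod a"
      proof -
        have "w = i + a" using False unfolding i_def by simp
        thus ?thesis by simp
      qed
      ultimately show ?thesis using e Erels_sym rtranclp_trans by metis
    qed
  qed
  have liftA: "(Erel r a \<sigma>)\<^sup>*\<^sup>* (arrow_tail \<alpha>') (arrow_head a s \<alpha>')"
    if q: "quiver_arrow a \<alpha>'" and nx: "\<alpha>' \<noteq> ArrX (a - 1)" and dd: "distinguished a s \<sigma>' \<alpha>'" for \<alpha>'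
  proof (cases \<alpha>')
    case (ArrX j)
    have j: "j < a - 1" using q nx ArrX by (auto simp: quiver_arrow_def)
    have "(Erel r a \<sigma>)\<^sup>*\<^sup>* (arrow_tail (ArrX j)) (arrow_head r a (ArrX j))"
    proof (rule Erel_arrow)
      show "quiver_arrow r (ArrX j)" using j ar by (simp add: quiver_arrow_def)
      show "ArrX j \<noteq> ArrX (r - 1)" using j ar by simp
      show "distinguished r a \<sigma> (ArrX j)"
      proof (rule distR)
        fix \<rho> assume h: "\<rho> \<in> rays a" "rayvec a s \<rho> \<in> \<sigma>'"
        have "Xdiv r a j (sh \<rho>) = Xdiv a s j \<rho>"
          using XR[OF adm r1 j h(1)] unfolding sh_def rp_def s_def by simp
        also have "\<dots> = 0" using dd h ArrX unfolding distinguished_def by simp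
        finally show "arrow_div r a (ArrX j) (sh \<rho>) = 0" by simp
      qed
    qed
    moreover have "(j + 1) mod r = j + 1" "(j + 1) mod a = j + 1" using j ar by auto
    ultimately show ?thesis using ArrX by simp
  next
    case (ArrY j)
    have j: "j < a" using q ArrY by (simp add: quiver_arrow_def)
    define i where "i = (j + s) mod a"
    have ia: "i < a" unfolding i_def using a0 by simp
    have "(Erel r a \<sigma>)\<^sup>*\<^sup>* (arrow_tail (ArrY (i + rp))) (arrow_head r a (ArrY (i + rp)))"
    proof (rule Erel_arrow)
      show "quiver_arrow r (ArrY (i + rp))" using ia ar unfolding rp_def by (simp add: quiver_arrow_def)
      show "ArrY (i + rp) \<noteq> ArrX (r - 1)" by simp
      show "distinguished r a \<sigma> (ArrY (i + rp))"
      proof (rule distR)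
        fix \<rho> assume h: "\<rho> \<in> rays a" "rayvec a s \<rho> \<in> \<sigma>'"
        have "Ydiv r a (i + rp) (sh \<rho>) = Ydiv a s j \<rho>"
          using YR[OF adm r1 j, of \<rho>] unfolding sh_def rp_def s_def i_def by simp
        also have "\<dots> = 0" using dd h ArrY unfolding distinguished_def by simp
        finally show "arrow_div r a (ArrY (i + rp)) (sh \<rho>) = 0" by simp
      qed
    qed
    moreover have "(i + rp + a) mod r = i" using ia ar unfolding rp_def by simp
    ultimately have e: "(Erel r a \<sigma>)\<^sup>*\<^sup>* (i + rp) i" by simp
    have "(i + rp) mod a = j"
    proof -
      have "(i + rp) mod a = (i + a - s) mod a" by (rule hr)
      also have "\<dots> = j mod a" by (rule HL[OF a0 _ sa]) (simp add: i_def)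
      finally show ?thesis using j by simp
    qed
    hence "(Erel r a \<sigma>)\<^sup>*\<^sup>* (i + rp) j" using cls[of "i + rp"] ia ar unfolding rp_def by simp
    hence "(Erel r a \<sigma>)\<^sup>*\<^sup>* j (i + rp)" by (rule Erels_sym)
    thus ?thesis using e ArrY rtranclp_trans unfolding i_def by fastforce
  next
    case (ArrZ j)
    have j: "j < a" using q ArrZ by (simp add: quiver_arrow_def)
    have "(Erel r a \<sigma>)\<^sup>*\<^sup>* (arrow_tail (ArrZ j)) (arrow_head r a (ArrZ j))"
    proof (rule Erel_arrow)
      show "quiver_arrow r (ArrZ j)" using j ar by (simp add: quiver_arrow_def)
      show "ArrZ j \<noteq> ArrX (r - 1)" by simp
      show "distinguished r a \<sigma> (ArrZ j)"
      proof (rule distR)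
        fix \<rho> assume h: "\<rho> \<in> rays a" "rayvec a s \<rho> \<in> \<sigma>'"
        have "Zdiv r a j (sh \<rho>) = Zdiv a s j \<rho>"
          using ZR[OF adm r1 _ h(1), of j] j ar unfolding sh_def rp_def s_def by simp
        also have "\<dots> = 0" using dd h ArrZ unfolding distinguished_def by simp
        finally show "arrow_div r a (ArrZ j) (sh \<rho>) = 0" by simp
      qed
    qed
    moreover have "(j + r - a) mod r = j + rp" using j ar unfolding rp_def by simp
    ultimately have e: "(Erel r a \<sigma>)\<^sup>*\<^sup>* j (j + rp)" by simp
    have "(Erel r a \<sigma>)\<^sup>*\<^sup>* (j + rp) ((j + rp) mod a)" using cls[of "j + rp"] j ar unfolding rp_def by simp
    moreover have "(j + rp) mod a = (j + a - s) mod a" by (rule hr)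
    ultimately show ?thesis using e ArrZ rtranclp_trans by fastforce
  qed
  have lift: "(Erel r a \<sigma>)\<^sup>*\<^sup>* x y" if hE: "Erel a s \<sigma>' x y" for x y
  proof -
    obtain \<alpha>' where h: "quiver_arrow a \<alpha>'" "\<alpha>' \<noteq> ArrX (a - 1)" "distinguished a s \<sigma>' \<alpha>'"
      "(arrow_tail \<alpha>' = x \<and> arrow_head a s \<alpha>' = y) \<or> (arrow_tail \<alpha>' = y \<and> arrow_head a s \<alpha>' = x)"
      using hE unfolding Erel_def by blast
    thus ?thesis using liftA[OF h(1-3)] Erels_sym by metis
  qed
  have IH': "(Erel a s \<sigma>')\<^sup>*\<^sup>* x y" if "x < a" "y < a" for x y
    using IH that unfolding s_def by blast
  have m: "(Erel r a \<sigma>)\<^sup>*\<^sup>* (u mod a) (v mod a)"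
    by (rule Erels_lift[OF lift IH']) (simp_all add: a0)
  show ?thesis using cls[OF u] cls[OF v] m Erels_sym rtranclp_trans by metis
qed

lemma conn: "adm r a \<Longrightarrow> \<sigma> \<in> danilov_cones r a \<Longrightarrow> u < r \<Longrightarrow> v < r \<Longrightarrow> (Erel r a \<sigma>)\<^sup>*\<^sup>* u v"
proof (induction r arbitrary: a \<sigma> u v rule: less_induct)
  case (less r)
  have r0: "0 < r" and ar: "a < r" using less.prems by (auto simp: adm_def)
  show ?case
  proof (cases "r = 1")
    case True thus ?thesis using less.prems by simp
  next
    case False
    hence r1: "1 < r" using r0 by simp
    have a0: "0 < a" using adm_pos[OF less.prems(1) r1] .
    note U = less.prems(2)[unfolded dc_unfold[OF less.prems(1) r1]]
    { assume "\<sigma> = {e2, e3, pvec r a (r - a)}"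
      hence ?thesis using conn_top[OF less.prems(1) r1 _ less.prems(3,4)] by simp }
    moreover
    { fix \<sigma>' assume s: "\<sigma> = lin3 e1 e2 (pvec r a (r - a)) ` \<sigma>'" "\<sigma>' \<in> danilov_cones (r - a) (r mod (r - a))"
      have "(Erel (r - a) (r mod (r - a)) \<sigma>')\<^sup>*\<^sup>* x y" if "x < r - a" "y < r - a" for x y
        by (rule less.IH[OF _ adm_L[OF less.prems(1) r1] s(2) that]) (use a0 ar in simp)
      hence ?thesis using conn_L[OF less.prems(1) r1 s(2) _ s(1) less.prems(3,4)] by blast }
    moreover
    { fix \<sigma>' assume s: "\<sigma> = lin3 e1 (pvec r a (r - a)) e3 ` \<sigma>'" "\<sigma>' \<in> danilov_cones a (aR r a)"
      have "(Erel a (aR r a) \<sigma>')\<^sup>*\<^sup>* x y" if "x < a" "y < a" for x y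
        by (rule less.IH[OF _ adm_R[OF less.prems(1) r1] s(2) that]) (use ar in simp)
      hence ?thesis using conn_R[OF less.prems(1) r1 s(2) _ s(1) less.prems(3,4)] by blast }
    ultimately show ?thesis using U by blast
  qed
qed

theorem mainTheorem9:
  fixes r a :: nat and \<sigma> :: "vec3 set"
  assumes "1 < r" and "0 < a" and "a < r" and "coprime r a"
    and "\<sigma> \<in> danilov_cones r a"
  shows "\<forall>u<r. \<forall>v<r.
    (\<lambda>i j. \<exists>\<alpha>. quiver_arrow r \<alpha> \<and> \<alpha> \<noteq> ArrX (r - 1) \<and> distinguished r a \<sigma> \<alpha> \<and>
       ((arrow_tail \<alpha> = i \<and> arrow_head r a \<alpha> = j) \<or> (arrow_tail \<alpha> = j \<and> arrow_head r a \<alpha> = i)))\<^sup>*\<^sup>* u v"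
proof (intro allI impI)
  fix u v assume "u < r" "v < r"
  moreover have "adm r a" using assms by (simp add: adm_def)
  ultimately have "(Erel r a \<sigma>)\<^sup>*\<^sup>* u v" using conn assms(5) by blast
  thus "(\<lambda>i j. \<exists>\<alpha>. quiver_arrow r \<alpha> \<and> \<alpha> \<noteq> ArrX (r - 1) \<and> distinguished r a \<sigma> \<alpha> \<and>
       ((arrow_tail \<alpha> = i \<and> arrow_head r a \<alpha> = j) \<or> (arrow_tail \<alpha> = j \<and> arrow_head r a \<alpha> = i)))\<^sup>*\<^sup>* u v"
    unfolding Erel_def .
qed

end
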